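(* Let $\Gamma$ be isoradially embedded in a flat surface $\Sigma$ with critical weights, and let $(C_\Gamma,y)$, $\psi_B,\psi_W$, $\theta_B,\theta_W,\mu_W$ and the operators $\bar\partial^{\varphi}_C$ be as in the context. Given any Kasteleyn orientation $\omega$ on $C_\Gamma\subset\Sigma$, there exists a unique discrete spin structure $\varphi_\omega$ on $C_\Gamma$ such that \[ K^\omega(C_\Gamma,y)\circ\exp\left(-\tfrac i2\theta_B\right)=\exp\left(-\tfrac i2\theta_W\right)\circ\mu_W\circ\bar\partial_C^{\varphi_\omega} \] as maps $\mathbb C^B\to\mathbb C^W$. Furthermore, $\omega\mapsto\varphi_\omega$ induces a bijection between equivalence classes of Kasteleyn orientations on $C_\Gamma\subset\Sigma$ and cohomology classes in $H^1(\Sigma;S^1)$ of discrete spin structures (inverse square roots of the holonomy of $\Sigma$).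
   Context: Isoradial setting: $\Sigma$ is a closed connected oriented flat surface with conical singularities obtained by gluing planar rhombi of common side length $\delta$ along their sides, each rhombus having a distinguished diagonal, such that endpoints of diagonals are glued to endpoints of diagonals; the diagonals form the edges of a graph $\Gamma\subset\Sigma$ whose faces are discs, and all cone angles (at vertices of $\Gamma$ and in faces) are odd multiples of $2\pi$. For an edge $e$, $\theta_e\in[0,\pi/2]$ is the half-rhombus angle (angle at an endpoint of $e$ between $e$ and a side of its rhombus); the critical weights are $x_e=\tan(\theta_e/2)$. Since cone angles are multiples of $2\pi$, parallel transport along closed curves avoiding the singularities defines the holonomy $\mathit{Hol}\in H^1(\Sigma;S^1)$. Notation: $\mathbb E$ oriented edges of $\Gamma$, $\bar e$ reversal, $\theta_{\bar e}=\theta_e$; for $e$ with origin $v$, $R(e)$ is the next oriented edge with origin $v$ counterclockwise. The bipartite graph $(C_\Gamma,y)$: each edge $e$ is replaced by a rectangle; for each orientation $e$, the rectangle vertex near $o(e)$ on the right of $e$ is black, $\psi_B(e)$, and the one near $o(e)$ on the left is white, $\psi_W(e)$; edges $\{\psi_W(e),\psi_B(e)\}$ of weight $\cos\theta_e$, $\{\psi_W(e),\psi_B(\bar e)\}$ of weight $\sin\theta_e$, and corner edges $\{\psi_W(e),\psi_B(R(e))\}$ of weight $1$. $B,W$ are the black/white vertex sets; $\psi_B,\psi_W$ are bijections from $\mathbb E$. A Kasteleyn orientation is $\omega\colon E(C_\Gamma)\to\{\pm1\}$ with product over the boundary of each face $f$ of $C_\Gamma\subset\Sigma$ equal to $(-1)^{|\partial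 f|/2+1}$; two are equivalent if related by flipping the signs of all edges at some set of vertices. $K^\omega(C_\Gamma,y)\colon\mathbb C^B\to\mathbb C^W$, $(K^\omega g)(w)=\sum_{b\sim w}\omega(w,b)y_{wb}g(b)$. Diagonal operators: $(\theta_Bg)(b)=\theta_eg(b)$ for $b=\psi_B(e)$; $(\theta_Wh)(w)=\theta_eh(w)$ and $(\mu_Wh)(w)=\mu_wh(w)$ for $w=\psi_W(e)$, with $\mu_w=\sin(2\theta_e)$ (half the sum of $\sin 2\vartheta$ over the half-rhombus angles $\theta_e,\pi/2-\theta_e,\pi/2$ of the three edges at $w$ in the natural $\delta/2$-isoradial embedding of $C_\Gamma$). Discrete $\bar\partial$-operator for a cochain $\varphi\colon$ (oriented edges of $C_\Gamma$)$\to\mathbb C^*$, $\varphi(b,w)=\varphi(w,b)^{-1}$ (computed in this isoradial embedding with the vector field at $w=\psi_W(e)$ pointing towards $\psi_B(e)$): for $w=\psi_W(e)$, $b_1=\psi_B(e)$, $b_2=\psi_B(\bar e)$, $b_3=\psi_B(R(e))$, \[ (\bar\partial^\varphi_Cg)(w)=\mu_w^{-1}\big(\varphi(w,b_1)\cos\theta_e\,g(b_1)+i\varphi(w,b_2)\sin\theta_e\,g(b_2)-e^{i\theta_e}\varphi(w,b_3)g(b_3)\big). \] A discrete spin structure is an $S^1$-valued 1-cocycle $\varphi$ on $C_\Gamma$ (product $1$ around each face of $C_\Gamma\subset\Sigma$) such that $\varphi(\gamma)^{-2}=\mathit{Hol}(\gamma)$ for every closed path $\gamma$ in $C_\Gamma$.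 *)

theory Defs
  imports Complex_Main "HOL-Library.FuncSet"
begin

(* Combinatorial model of an isoradial graph Gamma on a flat surface.  *)
(*   E    : the oriented edges (darts) of Gamma                        *)
(*   rv   : reversal e |-> bar e                                      *)
(*   R    : R(e) = next dart with the same origin, counterclockwise    *)
(*   th   : half-rhombus angles theta_e                                *)
(* The vertices of Gamma are the R-orbits; the faces are the orbits of *)
(* e |-> R^{-1}(bar e).  The flat surface Sigma is the one obtained by *)
(* gluing, for every edge e, a rhombus with angle 2 theta_e at the     *)
(* endpoints of its diagonal e, following the rotation system.         *)

definition orbit :: "('a \<Rightarrow> 'a) \<Rightarrow> 'a \<Rightarrow> 'a set" where
  "orbit f x = {(f ^^ n) x | n. True}"

definition isoradial :: "'d set \<Rightarrow> ('d \<Rightarrow> 'd) \<Rightarrow> ('d \<Rightarrow> 'd) \<Rightarrow> ('d \<Rightarrow> real) \<Rightarrow> bool" where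
  "isoradial E rv R th \<longleftrightarrow>
     finite E \<and> E \<noteq> {} \<and>
     (\<forall>e\<in>E. rv e \<in> E \<and> rv e \<noteq> e \<and> rv (rv e) = e) \<and>
     bij_betw R E E \<and>
     (\<forall>e\<in>E. th (rv e) = th e \<and> 0 \<le> th e \<and> th e \<le> pi / 2) \<and>
     \<comment> \<open>connectedness of Sigma\<close>
     (\<forall>e\<in>E. \<forall>e'\<in>E. (e, e') \<in> ({(x, R x) | x. x \<in> E} \<union> {(x, rv x) | x. x \<in> E})\<^sup>*) \<and>
     \<comment> \<open>cone angle at each vertex of Gamma is an odd multiple of 2 pi\<close>
     (\<forall>e\<in>E. \<exists>k::int. (\<Sum>x\<in>orbit R e. 2 * th x) = (2 * of_int k + 1) * (2 * pi)) \<and>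
     \<comment> \<open>cone angle in each face of Gamma is an odd multiple of 2 pi\<close>
     (\<forall>e\<in>E. \<exists>k::int. (\<Sum>x\<in>orbit (\<lambda>x. inv_into E R (rv x)) e. pi - 2 * th x)
                        = (2 * of_int k + 1) * (2 * pi))"

(* The bipartite graph C_Gamma.  Black vertex psi_B(e) = Bl e, white   *)
(* vertex psi_W(e) = Wh e.  The white vertex Wh e has exactly three    *)
(* edges, indexed by (e,k):                                           *)
(*   (e,Cos): Wh e -- Bl e        weight cos theta_e                  *)
(*   (e,Sin): Wh e -- Bl (bar e)  weight sin theta_e                  *)
(*   (e,Cor): Wh e -- Bl (R e)    weight 1                            *)
(* So functions on B (resp. W, resp. edges) are functions on darts     *)
(* (resp. darts, resp. dart x kind) via psi_B, psi_W.                  *)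

datatype ckind = Cos | Sin | Cor
datatype 'd cvert = Bl 'd | Wh 'd

fun ctgt :: "('d \<Rightarrow> 'd) \<Rightarrow> ('d \<Rightarrow> 'd) \<Rightarrow> ckind \<Rightarrow> 'd \<Rightarrow> 'd" where
  "ctgt rv R Cos e = e"
| "ctgt rv R Sin e = rv e"
| "ctgt rv R Cor e = R e"

fun cweight :: "('d \<Rightarrow> real) \<Rightarrow> ckind \<Rightarrow> 'd \<Rightarrow> real" where
  "cweight th Cos e = cos (th e)"
| "cweight th Sin e = sin (th e)"
| "cweight th Cor e = 1"

(* oriented edges of C_Gamma: (e,k,True) goes Wh e -> Bl (ctgt k e), (e,k,False) is its reversal *)
type_synonym 'd cdart = "'d \<times> ckind \<times> bool"

definition cdarts :: "'d set \<Rightarrow> 'd cdart set" where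
  "cdarts E = E \<times> UNIV \<times> UNIV"

fun corigin :: "('d \<Rightarrow> 'd) \<Rightarrow> ('d \<Rightarrow> 'd) \<Rightarrow> 'd cdart \<Rightarrow> 'd cvert" where
  "corigin rv R (e, k, True) = Wh e"
| "corigin rv R (e, k, False) = Bl (ctgt rv R k e)"

fun ctarget :: "('d \<Rightarrow> 'd) \<Rightarrow> ('d \<Rightarrow> 'd) \<Rightarrow> 'd cdart \<Rightarrow> 'd cvert" where
  "ctarget rv R (e, k, True) = Bl (ctgt rv R k e)"
| "ctarget rv R (e, k, False) = Wh e"

fun crev :: "'d cdart \<Rightarrow> 'd cdart" where
  "crev (e, k, b) = (e, k, \<not> b)"

(* Inverse of the counterclockwise rotation at the origin of a dart of C_Gamma \<subset> Sigma.
   Counterclockwise order at Wh e:  (e,Sin), (e,Cor), (e,Cos).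
   Counterclockwise order at Bl x:  (bar x,Sin), (x,Cos), (R^{-1} x,Cor). *)
fun crot_inv :: "'d set \<Rightarrow> ('d \<Rightarrow> 'd) \<Rightarrow> ('d \<Rightarrow> 'd) \<Rightarrow> 'd cdart \<Rightarrow> 'd cdart" where
  "crot_inv E rv R (e, Sin, True) = (e, Cos, True)"
| "crot_inv E rv R (e, Cor, True) = (e, Sin, True)"
| "crot_inv E rv R (e, Cos, True) = (e, Cor, True)"
| "crot_inv E rv R (e, Cos, False) = (rv e, Sin, False)"
| "crot_inv E rv R (e, Cor, False) = (R e, Cos, False)"
| "crot_inv E rv R (e, Sin, False) = (inv_into E R (rv e), Cor, False)"

(* face permutation of C_Gamma \<subset> Sigma; faces = orbits, boundary walk = orbit *)
definition cface :: "'d set \<Rightarrow> ('d \<Rightarrow> 'd) \<Rightarrow> ('d \<Rightarrow> 'd) \<Rightarrow> 'd cdart \<Rightarrow> 'd cdart" where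
  "cface E rv R d = crot_inv E rv R (crev d)"

fun cedge :: "'d cdart \<Rightarrow> 'd \<times> ckind" where
  "cedge (e, k, b) = (e, k)"

definition kasteleyn :: "'d set \<Rightarrow> ('d \<Rightarrow> 'd) \<Rightarrow> ('d \<Rightarrow> 'd) \<Rightarrow> ('d \<times> ckind \<Rightarrow> real) \<Rightarrow> bool" where
  "kasteleyn E rv R \<omega> \<longleftrightarrow>
     \<omega> \<in> extensional (E \<times> UNIV) \<and>
     (\<forall>e\<in>E. \<forall>k. \<omega> (e, k) = 1 \<or> \<omega> (e, k) = -1) \<and>
     (\<forall>d\<in>cdarts E. (\<Prod>d'\<in>orbit (cface E rv R) d. \<omega> (cedge d'))
                     = (-1) ^ (card (orbit (cface E rv R) d) div 2 + 1))"

definition kast_equiv :: "'d set \<Rightarrow> ('d \<Rightarrow> 'd) \<Rightarrow> ('d \<Rightarrow> 'd) \<Rightarrow> ('d \<times> ckind \<Rightarrow> real) \<Rightarrow> ('d \<times> ckind \<Rightarrow> real) \<Rightarrow> bool" where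
  "kast_equiv E rv R \<omega>1 \<omega>2 \<longleftrightarrow>
     (\<exists>s :: 'd cvert \<Rightarrow> real. (\<forall>v. s v = 1 \<or> s v = -1) \<and>
        (\<forall>e\<in>E. \<forall>k. \<omega>2 (e, k) = s (Wh e) * \<omega>1 (e, k) * s (Bl (ctgt rv R k e))))"

(* Kasteleyn operator K^omega(C_Gamma,y) : C^B -> C^W  (g indexed by psi_B, result by psi_W) *)
definition kast_op :: "('d \<Rightarrow> 'd) \<Rightarrow> ('d \<Rightarrow> 'd) \<Rightarrow> ('d \<Rightarrow> real) \<Rightarrow> ('d \<times> ckind \<Rightarrow> real)
                        \<Rightarrow> ('d \<Rightarrow> complex) \<Rightarrow> 'd \<Rightarrow> complex" where
  "kast_op rv R th \<omega> g e =
     (\<Sum>k\<in>{Cos, Sin, Cor}. complex_of_real (\<omega> (e, k) * cweight th k e) * g (ctgt rv R k e))"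

definition mu :: "('d \<Rightarrow> real) \<Rightarrow> 'd \<Rightarrow> real" where
  "mu th e = sin (2 * th e)"

(* phi (e,k) is the value phi(w,b) on the edge (e,k) oriented from white to black *)
definition dbar :: "('d \<Rightarrow> 'd) \<Rightarrow> ('d \<Rightarrow> 'd) \<Rightarrow> ('d \<Rightarrow> real) \<Rightarrow> ('d \<times> ckind \<Rightarrow> complex)
                     \<Rightarrow> ('d \<Rightarrow> complex) \<Rightarrow> 'd \<Rightarrow> complex" where
  "dbar rv R th \<phi> g e =
     inverse (complex_of_real (mu th e)) *
       (\<phi> (e, Cos) * complex_of_real (cos (th e)) * g e
        + \<i> * \<phi> (e, Sin) * complex_of_real (sin (th e)) * g (rv e)
        - exp (\<i> * complex_of_real (th e)) * \<phi> (e, Cor) * g (R e))"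

definition dirac_identity :: "'d set \<Rightarrow> ('d \<Rightarrow> 'd) \<Rightarrow> ('d \<Rightarrow> 'd) \<Rightarrow> ('d \<Rightarrow> real)
                               \<Rightarrow> ('d \<times> ckind \<Rightarrow> real) \<Rightarrow> ('d \<times> ckind \<Rightarrow> complex) \<Rightarrow> bool" where
  "dirac_identity E rv R th \<omega> \<phi> \<longleftrightarrow>
     (\<forall>g. \<forall>e\<in>E.
        kast_op rv R th \<omega> (\<lambda>x. exp (- \<i> * complex_of_real (th x) / 2) * g x) e
        = exp (- \<i> * complex_of_real (th e) / 2) * complex_of_real (mu th e) * dbar rv R th \<phi> g e)"

(* Angles of the edges of C_Gamma at their endpoints in the natural delta/2-isoradial embedding,
   measured counterclockwise from the reference vector field (at Wh e pointing to Bl e,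
   at Bl x pointing to Wh x). *)
fun angW :: "('d \<Rightarrow> 'd) \<Rightarrow> ('d \<Rightarrow> real) \<Rightarrow> ckind \<Rightarrow> 'd \<Rightarrow> real" where
  "angW R th Cos e = 0"
| "angW R th Sin e = pi / 2"
| "angW R th Cor e = pi + th e"

fun angB :: "('d \<Rightarrow> 'd) \<Rightarrow> ('d \<Rightarrow> real) \<Rightarrow> ckind \<Rightarrow> 'd \<Rightarrow> real" where
  "angB R th Cos e = 0"
| "angB R th Sin e = - pi / 2"
| "angB R th Cor e = pi - th (R e)"

(* Parallel transport along the straight dart x->y rotates the reference vector at x into
   the reference vector at y rotated by c = pi + ang_y(y->x) - ang_x(x->y).
   hol_dart = exp(-i c): holonomy factor (rotation angles counted clockwise, the convention
   under which Hol = phi^{-2}). *)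
fun hol_dart :: "('d \<Rightarrow> 'd) \<Rightarrow> ('d \<Rightarrow> real) \<Rightarrow> 'd cdart \<Rightarrow> complex" where
  "hol_dart R th (e, k, True) =
     exp (- \<i> * complex_of_real (pi + angB R th k e - angW R th k e))"
| "hol_dart R th (e, k, False) =
     exp (- \<i> * complex_of_real (pi + angW R th k e - angB R th k e))"

definition closed_path :: "'d set \<Rightarrow> ('d \<Rightarrow> 'd) \<Rightarrow> ('d \<Rightarrow> 'd) \<Rightarrow> 'd cdart list \<Rightarrow> bool" where
  "closed_path E rv R \<gamma> \<longleftrightarrow>
     \<gamma> \<noteq> [] \<and> set \<gamma> \<subseteq> cdarts E \<and>
     (\<forall>i. Suc i < length \<gamma> \<longrightarrow> ctarget rv R (\<gamma> ! i) = corigin rv R (\<gamma> ! Suc i)) \<and>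
     ctarget rv R (last \<gamma>) = corigin rv R (hd \<gamma>)"

definition path_hol :: "('d \<Rightarrow> 'd) \<Rightarrow> ('d \<Rightarrow> real) \<Rightarrow> 'd cdart list \<Rightarrow> complex" where
  "path_hol R th \<gamma> = prod_list (map (hol_dart R th) \<gamma>)"

fun dphi :: "('d \<times> ckind \<Rightarrow> complex) \<Rightarrow> 'd cdart \<Rightarrow> complex" where
  "dphi \<phi> (e, k, True) = \<phi> (e, k)"
| "dphi \<phi> (e, k, False) = inverse (\<phi> (e, k))"

definition path_phi :: "('d \<times> ckind \<Rightarrow> complex) \<Rightarrow> 'd cdart list \<Rightarrow> complex" where
  "path_phi \<phi> \<gamma> = prod_list (map (dphi \<phi>) \<gamma>)"

definition spin_structure :: "'d set \<Rightarrow> ('d \<Rightarrow> 'd) \<Rightarrow> ('d \<Rightarrow> 'd) \<Rightarrow> ('d \<Rightarrow> real)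
                               \<Rightarrow> ('d \<times> ckind \<Rightarrow> complex) \<Rightarrow> bool" where
  "spin_structure E rv R th \<phi> \<longleftrightarrow>
     \<phi> \<in> extensional (E \<times> UNIV) \<and>
     (\<forall>e\<in>E. \<forall>k. norm (\<phi> (e, k)) = 1) \<and>
     (\<forall>d\<in>cdarts E. (\<Prod>d'\<in>orbit (cface E rv R) d. dphi \<phi> d') = 1) \<and>
     (\<forall>\<gamma>. closed_path E rv R \<gamma> \<longrightarrow> inverse (path_phi \<phi> \<gamma> ^ 2) = path_hol R th \<gamma>)"

definition cohomologous :: "'d set \<Rightarrow> ('d \<Rightarrow> 'd) \<Rightarrow> ('d \<Rightarrow> 'd)
                             \<Rightarrow> ('d \<times> ckind \<Rightarrow> complex) \<Rightarrow> ('d \<times> ckind \<Rightarrow> complex) \<Rightarrow> bool" where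
  "cohomologous E rv R \<phi>1 \<phi>2 \<longleftrightarrow>
     (\<exists>f :: 'd cvert \<Rightarrow> complex. (\<forall>v. norm (f v) = 1) \<and>
        (\<forall>e\<in>E. \<forall>k. \<phi>2 (e, k) = \<phi>1 (e, k) * f (Bl (ctgt rv R k e)) / f (Wh e)))"

end

theory Submission
  imports Defs
begin

lemma ckind_UNIV: "(UNIV :: ckind set) = {Cos,Sin,Cor}" by (auto intro: ckind.exhaust)
lemma finite_ckind[simp]: "finite (UNIV :: ckind set)" by (simp add: ckind_UNIV)

lemma funpow_cancel:
  assumes "inj_on f A" "f ` A \<subseteq> A" "x \<in> A" "(f ^^ (i + m)) x = (f ^^ i) x"
  shows "(f ^^ m) x = x"
  using assms(4)
proof (induction i)
  case 0 then show ?case by simp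
next
  case (Suc i)
  have inA: "\<And>n. (f ^^ n) x \<in> A"
  proof -
    fix n show "(f ^^ n) x \<in> A" by (induction n) (use assms in auto)
  qed
  from Suc.prems have "f ((f ^^ (i + m)) x) = f ((f ^^ i) x)" by simp
  then have "(f ^^ (i + m)) x = (f ^^ i) x" using assms(1) inA by (meson inj_onD)
  then show ?case using Suc.IH by simp
qed

lemma funpow_in: "f ` A \<subseteq> A \<Longrightarrow> x \<in> A \<Longrightarrow> (f ^^ n) x \<in> A"
  by (induction n) auto

lemma funpow_period:
  assumes "finite A" "inj_on f A" "f ` A \<subseteq> A" "x \<in> A"
  shows "\<exists>p>0. (f ^^ p) x = x"
proof -
  have "\<not> inj_on (\<lambda>n. (f ^^ n) x) {..card A}"
  proof
    assume "inj_on (\<lambda>n. (f ^^ n) x) {..card A}"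
    moreover have "(\<lambda>n. (f ^^ n) x) ` {..card A} \<subseteq> A" using funpow_in[OF assms(3,4)] by auto
    ultimately have "card {..card A} \<le> card A" using card_inj_on_le assms(1) by blast
    then show False by simp
  qed
  then obtain i j where ij: "i \<le> card A" "j \<le> card A" "i \<noteq> j" "(f ^^ i) x = (f ^^ j) x"
    unfolding inj_on_def by auto
  show ?thesis
  proof (cases "i < j")
    case True
    then have "(f ^^ (i + (j - i))) x = (f ^^ i) x" using ij by simp
    then have "(f ^^ (j - i)) x = x" by (rule funpow_cancel[OF assms(2,3,4)])
    then show ?thesis using True by (intro exI[of _ "j - i"]) auto
  next
    case False
    then have "(f ^^ (j + (i - j))) x = (f ^^ j) x" using ij by simp
    then have "(f ^^ (i - j)) x = x" by (rule funpow_cancel[OF assms(2,3,4)])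
    then show ?thesis using False ij by (intro exI[of _ "i - j"]) auto
  qed
qed

lemma orbit_image:
  assumes "p > 0" "(f ^^ p) x = x"
  shows "f ` orbit f x = orbit f x"
proof
  show "f ` orbit f x \<subseteq> orbit f x"
  proof
    fix y assume "y \<in> f ` orbit f x"
    then obtain n where "y = f ((f ^^ n) x)" unfolding orbit_def by auto
    then have "y = (f ^^ Suc n) x" by simp
    then show "y \<in> orbit f x" unfolding orbit_def by blast
  qed
  show "orbit f x \<subseteq> f ` orbit f x"
  proof
    fix y assume "y \<in> orbit f x"
    then obtain n where y: "y = (f ^^ n) x" unfolding orbit_def by auto
    have "(f ^^ (n + p)) x = y" using y assms(2) by (simp add: funpow_add)
    moreover have "n + p = Suc (n + p - 1)" using assms(1) by simp
    ultimately have "y = f ((f ^^ (n + p - 1)) x)" by (metis funpow.simps(2) o_apply)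
    then show "y \<in> f ` orbit f x" unfolding orbit_def by auto
  qed
qed

lemma orbit_sub: "f ` A \<subseteq> A \<Longrightarrow> x \<in> A \<Longrightarrow> orbit f x \<subseteq> A"
proof
  fix y assume "f ` A \<subseteq> A" "x \<in> A" "y \<in> orbit f x"
  then show "y \<in> A" unfolding orbit_def using funpow_in[of f A x] by auto
qed

lemma orbit_self: "x \<in> orbit f x"
  unfolding orbit_def by (auto intro: exI[of _ 0])

lemma orbit_range: "orbit f x = range (\<lambda>n. (f ^^ n) x)"
  unfolding orbit_def by auto

lemma cis_prod: "finite A \<Longrightarrow> (\<Prod>x\<in>A. cis (f x)) = cis (\<Sum>x\<in>A. f x)"
  by (induction A rule: finite_induct) (auto simp: cis_mult)

lemma exp_cis: "exp (\<i> * complex_of_real t) = cis t"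
  by (simp add: cis_conv_exp)
lemma exp_cis2: "exp (- \<i> * complex_of_real t / 2) = cis (- t / 2)"
  by (simp add: cis_conv_exp)
lemma cis_mpi[simp]: "cis (- pi) = -1"
  using cis_inverse[of pi] by simp
lemma exp_m2pi[simp]: "exp (- (\<i> * (2 * complex_of_real pi))) = 1"
proof -
  have "exp (- (\<i> * (2 * complex_of_real pi))) = cis (- (2 * pi))" by (simp add: cis_conv_exp)
  also have "\<dots> = 1" using cis_multiple_2pi[of "-1"] by simp
  finally show ?thesis .
qed
lemma exp_cis4: "exp (- (\<i> * complex_of_real t)) = cis (- t)"
  by (simp add: cis_conv_exp)
lemma exp_cis3: "exp (- \<i> * complex_of_real t) = cis (- t)"
  by (simp add: cis_conv_exp)

section \<open>Consequences of isoradiality\<close>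

definition Fp :: "'d set \<Rightarrow> ('d \<Rightarrow> 'd) \<Rightarrow> ('d \<Rightarrow> 'd) \<Rightarrow> 'd \<Rightarrow> 'd" where
  "Fp E rv R x = inv_into E R (rv x)"

context
  fixes E :: "'d set" and rv R :: "'d \<Rightarrow> 'd" and th :: "'d \<Rightarrow> real"
  assumes iso: "isoradial E rv R th"
begin

lemma iso_fin: "finite E" using iso unfolding isoradial_def by auto
lemma iso_ne: "E \<noteq> {}" using iso unfolding isoradial_def by auto
lemma rv_in: "e \<in> E \<Longrightarrow> rv e \<in> E" using iso unfolding isoradial_def by auto
lemma rv_neq: "e \<in> E \<Longrightarrow> rv e \<noteq> e" using iso unfolding isoradial_def by auto
lemma rv_rv: "e \<in> E \<Longrightarrow> rv (rv e) = e" using iso unfolding isoradial_def by auto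
lemma th_rv: "e \<in> E \<Longrightarrow> th (rv e) = th e" using iso unfolding isoradial_def by auto
lemma bijR: "bij_betw R E E" using iso unfolding isoradial_def by auto
lemma injR: "inj_on R E" using bijR by (simp add: bij_betw_def)
lemma R_img: "R ` E = E" using bijR by (simp add: bij_betw_def)
lemma R_in: "e \<in> E \<Longrightarrow> R e \<in> E" using R_img by auto
lemma rv_img: "rv ` E \<subseteq> E" using rv_in by auto
lemma inj_rv: "inj_on rv E" by (metis inj_onI rv_rv)

lemma Fp_in: "e \<in> E \<Longrightarrow> Fp E rv R e \<in> E"
  unfolding Fp_def using R_img rv_in by (metis inv_into_into)
lemma R_Fp: "e \<in> E \<Longrightarrow> R (Fp E rv R e) = rv e"
  unfolding Fp_def using R_img rv_in by (metis f_inv_into_f)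
lemma Fp_img: "Fp E rv R ` E \<subseteq> E" using Fp_in by auto
lemma inj_Fp: "inj_on (Fp E rv R) E"
proof (rule inj_onI)
  fix x y assume "x \<in> E" "y \<in> E" "Fp E rv R x = Fp E rv R y"
  then have "rv x = rv y" using R_Fp by metis
  then show "x = y" using \<open>x \<in> E\<close> \<open>y \<in> E\<close> rv_rv by metis
qed

lemma conn: "e \<in> E \<Longrightarrow> e' \<in> E \<Longrightarrow> (e, e') \<in> ({(x, R x) | x. x \<in> E} \<union> {(x, rv x) | x. x \<in> E})\<^sup>*"
  using iso unfolding isoradial_def by auto
lemma vcone: "e \<in> E \<Longrightarrow> \<exists>k::int. (\<Sum>x\<in>orbit R e. 2 * th x) = (2 * of_int k + 1) * (2 * pi)"
  using iso unfolding isoradial_def by auto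
lemma fcone: "e \<in> E \<Longrightarrow> \<exists>k::int. (\<Sum>x\<in>orbit (Fp E rv R) e. pi - 2 * th x) = (2 * of_int k + 1) * (2 * pi)"
  using iso unfolding isoradial_def Fp_def by auto

lemma R_period: "e \<in> E \<Longrightarrow> \<exists>p>0. (R ^^ p) e = e"
  using funpow_period[OF iso_fin injR] R_img by auto
lemma Fp_period: "e \<in> E \<Longrightarrow> \<exists>p>0. (Fp E rv R ^^ p) e = e"
  using funpow_period[OF iso_fin inj_Fp Fp_img] by auto

lemma R_orbit_img: "e \<in> E \<Longrightarrow> R ` orbit R e = orbit R e"
  using R_period orbit_image by metis
lemma Fp_orbit_img: "e \<in> E \<Longrightarrow> Fp E rv R ` orbit (Fp E rv R) e = orbit (Fp E rv R) e"
  using Fp_period orbit_image by metis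
lemma R_orbit_sub: "e \<in> E \<Longrightarrow> orbit R e \<subseteq> E"
  using orbit_sub[of R E e] R_img by auto
lemma Fp_orbit_sub: "e \<in> E \<Longrightarrow> orbit (Fp E rv R) e \<subseteq> E"
  using orbit_sub[OF Fp_img] by auto

end


section \<open>Two-step orbits\<close>

lemma twostep_iter:
  assumes fa: "\<And>y. f (a y) = b (g y)" and fb: "\<And>y. f (b y) = a y"
  shows "(f ^^ (2 * n)) (a x) = a ((g ^^ n) x) \<and> (f ^^ Suc (2 * n)) (a x) = b ((g ^^ Suc n) x)
       \<and> (f ^^ (2 * n)) (b x) = b ((g ^^ n) x) \<and> (f ^^ Suc (2 * n)) (b x) = a ((g ^^ n) x)"
proof (induction n)
  case 0 then show ?case by (simp add: fa fb)
next
  case (Suc n)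
  have e: "2 * Suc n = Suc (Suc (2 * n))" by simp
  show ?case using Suc by (simp only: e funpow.simps o_apply) (simp add: fa fb)
qed

lemma orbit_mem: "(f ^^ n) x \<in> orbit f x"
  unfolding orbit_def by blast

lemma orbit_elim: "y \<in> orbit f x \<Longrightarrow> \<exists>n. y = (f ^^ n) x"
  unfolding orbit_def by blast

lemma twostep_orbit:
  assumes fa: "\<And>y. f (a y) = b (g y)" and fb: "\<And>y. f (b y) = a y"
    and gi: "g ` orbit g x = orbit g x"
  shows "orbit f (a x) = a ` orbit g x \<union> b ` orbit g x"
    and "orbit f (b x) = a ` orbit g x \<union> b ` orbit g x"
proof -
  note it = twostep_iter[of f a b g, OF fa fb]
  have ev: "\<And>m. \<exists>n. m = 2 * n \<or> m = Suc (2 * n)" by presburger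
  have A1: "a ((g ^^ n) x) \<in> a ` orbit g x \<union> b ` orbit g x" for n using orbit_mem[where f=g and n=n and x=x] by blast
  have B1: "b ((g ^^ n) x) \<in> a ` orbit g x \<union> b ` orbit g x" for n using orbit_mem[where f=g and n=n and x=x] by blast
  have sub: "orbit f z \<subseteq> a ` orbit g x \<union> b ` orbit g x" if "z = a x \<or> z = b x" for z
  proof
    fix y assume "y \<in> orbit f z"
    then obtain m where y: "y = (f ^^ m) z" by (metis orbit_elim)
    obtain n where "m = 2 * n \<or> m = Suc (2 * n)" using ev by blast
    then show "y \<in> a ` orbit g x \<union> b ` orbit g x"
    proof (elim disjE)
      assume m: "m = 2 * n"
      show ?thesis using that
      proof (elim disjE)
        assume "z = a x" then show ?thesis using y m it[of n x] A1[of n] by simp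
      next
        assume "z = b x" then show ?thesis using y m it[of n x] B1[of n] by simp
      qed
    next
      assume m: "m = Suc (2 * n)"
      show ?thesis using that
      proof (elim disjE)
        assume "z = a x" then show ?thesis using y m it[of n x] B1[of "Suc n"] by (simp del: funpow.simps)
      next
        assume "z = b x" then show ?thesis using y m it[of n x] A1[of n] by (simp del: funpow.simps)
      qed
    qed
  qed
  have sup: "a ` orbit g x \<union> b ` orbit g x \<subseteq> orbit f z" if "z = a x \<or> z = b x" for z
  proof
    fix y assume "y \<in> a ` orbit g x \<union> b ` orbit g x"
    then consider w where "w \<in> orbit g x" "y = a w" | w where "w \<in> orbit g x" "y = b w" by blast
    then show "y \<in> orbit f z"
    proof cases
      case 1
      then obtain n where n: "w = (g ^^ n) x" by (metis orbit_elim)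
      show ?thesis
      proof (cases "z = a x")
        case True
        then have "y = (f ^^ (2 * n)) z" using 1 n it[of n x] by (simp add: fa fb)
        then show ?thesis using orbit_mem[where f=f and n="2 * n" and x=z] by simp
      next
        case False
        then have "y = (f ^^ Suc (2 * n)) z" using that 1 n it[of n x] by (simp add: fa fb)
        then show ?thesis using orbit_mem[where f=f and n="Suc (2 * n)" and x=z] by simp
      qed
    next
      case 2
      show ?thesis
      proof (cases "z = a x")
        case True
        have "w \<in> g ` orbit g x" using gi 2 by simp
        then obtain w' where w': "w' \<in> orbit g x" "w = g w'" by blast
        obtain n where "w' = (g ^^ n) x" using orbit_elim[OF w'(1)] by blast
        then have "w = g ((g ^^ n) x)" using w' by simp
        then have n: "w = (g ^^ Suc n) x" by simp
        then have "y = (f ^^ Suc (2 * n)) z" using True 2 n it[of n x] by (simp add: fa fb)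
        then show ?thesis using orbit_mem[where f=f and n="Suc (2 * n)" and x=z] by simp
      next
        case False
        then have zb: "z = b x" using that by simp
        obtain n where n: "w = (g ^^ n) x" using 2 by (metis orbit_elim)
        then have "y = (f ^^ (2 * n)) z" using zb 2 n it[of n x] by (simp add: fa fb)
        then show ?thesis using orbit_mem[where f=f and n="2 * n" and x=z] by simp
      qed
    qed
  qed
  show "orbit f (a x) = a ` orbit g x \<union> b ` orbit g x" by (rule equalityI[OF sub sup]) simp_all
  show "orbit f (b x) = a ` orbit g x \<union> b ` orbit g x" by (rule equalityI[OF sub sup]) simp_all
qed

lemma twostep_prod:
  assumes "finite Ob" "inj a" "inj b" "\<And>x y. a x \<noteq> b y"
  shows "prod h (a ` Ob \<union> b ` Ob) = prod (\<lambda>x. h (a x)) Ob * prod (\<lambda>x. h (b x)) Ob"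
    and "card (a ` Ob \<union> b ` Ob) = 2 * card Ob"
proof -
  have d: "a ` Ob \<inter> b ` Ob = {}" using assms(4) by auto
  have ia: "inj_on a Ob" and ib: "inj_on b Ob" using assms(2,3) by (auto intro: inj_on_subset)
  show "prod h (a ` Ob \<union> b ` Ob) = prod (\<lambda>x. h (a x)) Ob * prod (\<lambda>x. h (b x)) Ob"
  proof -
    have 1: "prod h (a ` Ob) = (\<Prod>x\<in>Ob. h (a x))" using prod.reindex[OF ia] by (simp add: o_def)
    have 2: "prod h (b ` Ob) = (\<Prod>x\<in>Ob. h (b x))" using prod.reindex[OF ib] by (simp add: o_def)
    show ?thesis using prod.union_disjoint[of "a ` Ob" "b ` Ob" h] d assms(1) 1 2 by simp
  qed
  show "card (a ` Ob \<union> b ` Ob) = 2 * card Ob"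
    using card_Un_disjoint[of "a ` Ob" "b ` Ob"] d assms(1) card_image[OF ia] card_image[OF ib] by simp
qed


section \<open>Phases\<close>

fun cph :: "('d \<Rightarrow> 'd) \<Rightarrow> ('d \<Rightarrow> real) \<Rightarrow> 'd \<times> ckind \<Rightarrow> complex" where
  "cph R th (e, Cos) = 1"
| "cph R th (e, Sin) = - \<i>"
| "cph R th (e, Cor) = - cis (- (th e + th (R e)) / 2)"

lemma cis_odd_pi: "cis (- ((2 * of_int k + 1) * pi)) = -1"
proof -
  have a: "(2 * of_int k + 1) * pi = 2 * pi * of_int k + pi" by (simp add: algebra_simps)
  have "cis ((2 * of_int k + 1) * pi) = cis (2 * pi * of_int k) * cis pi"
    unfolding a cis_mult ..
  also have "\<dots> = -1" by simp
  finally have "cis ((2 * of_int k + 1) * pi) = -1" .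
  then have "inverse (cis ((2 * of_int k + 1) * pi)) = -1" by simp
  then show ?thesis by simp
qed


context
  fixes E :: "'d set" and rv R :: "'d \<Rightarrow> 'd" and th :: "'d \<Rightarrow> real"
  assumes iso: "isoradial E rv R th"
begin

lemma rv_iter: "e \<in> E \<Longrightarrow> (rv ^^ n) e = (if even n then e else rv e)"
  by (induction n) (auto simp: rv_rv[OF iso])

lemma orbit_rv: "e \<in> E \<Longrightarrow> orbit rv e = {e, rv e}"
proof
  assume e: "e \<in> E"
  show "orbit rv e \<subseteq> {e, rv e}"
  proof
    fix y assume "y \<in> orbit rv e"
    then have "\<exists>n. y = (rv ^^ n) e" by (rule orbit_elim)
    then obtain n where "y = (rv ^^ n) e" by blast
    then show "y \<in> {e, rv e}" using rv_iter[OF e, of n] by (simp split: if_splits)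
  qed
  show "{e, rv e} \<subseteq> orbit rv e"
    using orbit_mem[where f=rv and n=0 and x=e] orbit_mem[where f=rv and n=1 and x=e] by simp
qed

lemma rv_orbit_img: "e \<in> E \<Longrightarrow> rv ` orbit rv e = orbit rv e"
  using orbit_rv rv_rv[OF iso] by auto

lemma orbit_rect:
  assumes "e \<in> E"
  shows "orbit (cface E rv R) (e, Cos, True) = (\<lambda>x. (x, Cos, True)) ` orbit rv e \<union> (\<lambda>x. (x, Sin, False)) ` orbit rv e"
    and "orbit (cface E rv R) (e, Sin, False) = (\<lambda>x. (x, Cos, True)) ` orbit rv e \<union> (\<lambda>x. (x, Sin, False)) ` orbit rv e"
  using twostep_orbit[where f="cface E rv R" and a="\<lambda>x. (x, Cos, True)" and b="\<lambda>x. (x, Sin, False)" and g=rv and x=e]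
    rv_orbit_img[OF assms] by (simp_all add: cface_def)

lemma orbit_vert:
  assumes "e \<in> E"
  shows "orbit (cface E rv R) (e, Cor, True) = (\<lambda>x. (x, Cor, True)) ` orbit R e \<union> (\<lambda>x. (x, Cos, False)) ` orbit R e"
    and "orbit (cface E rv R) (e, Cos, False) = (\<lambda>x. (x, Cor, True)) ` orbit R e \<union> (\<lambda>x. (x, Cos, False)) ` orbit R e"
  using twostep_orbit[where f="cface E rv R" and a="\<lambda>x. (x, Cor, True)" and b="\<lambda>x. (x, Cos, False)" and g=R and x=e]
    R_orbit_img[OF iso assms] by (simp_all add: cface_def)

lemma orbit_facec:
  assumes "e \<in> E"
  shows "orbit (cface E rv R) (e, Sin, True) = (\<lambda>x. (x, Sin, True)) ` orbit (Fp E rv R) e \<union> (\<lambda>x. (x, Cor, False)) ` orbit (Fp E rv R) e"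
    and "orbit (cface E rv R) (e, Cor, False) = (\<lambda>x. (x, Sin, True)) ` orbit (Fp E rv R) e \<union> (\<lambda>x. (x, Cor, False)) ` orbit (Fp E rv R) e"
  using twostep_orbit[where f="cface E rv R" and a="\<lambda>x. (x, Sin, True)" and b="\<lambda>x. (x, Cor, False)" and g="Fp E rv R" and x=e]
    Fp_orbit_img[OF iso assms] by (simp_all add: cface_def Fp_def)


lemma sum_R_orbit: "e \<in> E \<Longrightarrow> (\<Sum>x\<in>orbit R e. h (R x)) = (\<Sum>x\<in>orbit R e. h x)"
proof -
  assume e: "e \<in> E"
  have "inj_on R (orbit R e)" using injR[OF iso] R_orbit_sub[OF iso e] inj_on_subset by blast
  then have "sum h (R ` orbit R e) = (\<Sum>x\<in>orbit R e. h (R x))" using sum.reindex by (simp add: o_def sum.reindex)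
  then show ?thesis using R_orbit_img[OF iso e] by simp
qed

lemma sum_Fp_orbit: "e \<in> E \<Longrightarrow> (\<Sum>x\<in>orbit (Fp E rv R) e. th (R x)) = (\<Sum>x\<in>orbit (Fp E rv R) e. th x)"
proof -
  assume e: "e \<in> E"
  let ?O = "orbit (Fp E rv R) e"
  have sub: "?O \<subseteq> E" using Fp_orbit_sub[OF iso e] .
  have "inj_on (Fp E rv R) ?O" using inj_Fp[OF iso] sub inj_on_subset by blast
  then have "(\<Sum>x\<in>Fp E rv R ` ?O. th (R x)) = (\<Sum>x\<in>?O. th (R (Fp E rv R x)))" by (simp add: sum.reindex)
  also have "\<dots> = (\<Sum>x\<in>?O. th x)"
    by (rule sum.cong) (use sub R_Fp[OF iso] th_rv[OF iso] in auto)
  finally show ?thesis using Fp_orbit_img[OF iso e] by simp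
qed

lemma fin_orbit_R: "e \<in> E \<Longrightarrow> finite (orbit R e)"
  using R_orbit_sub[OF iso] iso_fin[OF iso] finite_subset by blast
lemma fin_orbit_Fp: "e \<in> E \<Longrightarrow> finite (orbit (Fp E rv R) e)"
  using Fp_orbit_sub[OF iso] iso_fin[OF iso] finite_subset by blast

lemma vert_val:
  assumes e: "e \<in> E"
  shows "(\<Prod>x\<in>orbit R e. - cis (- (th x + th (R x)) / 2)) = (-1) ^ (card (orbit R e) + 1)"
proof -
  let ?O = "orbit R e"
  let ?S = "\<Sum>x\<in>?O. th x"
  have fin: "finite ?O" using fin_orbit_R[OF e] .
  have "(\<Prod>x\<in>?O. - cis (- (th x + th (R x)) / 2)) = (\<Prod>x\<in>?O. (-1) * cis (- (th x + th (R x)) / 2))"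
    by simp
  also have "\<dots> = (\<Prod>x\<in>?O. -1) * (\<Prod>x\<in>?O. cis (- (th x + th (R x)) / 2))"
    by (rule prod.distrib)
  also have "\<dots> = (-1) ^ card ?O * cis (\<Sum>x\<in>?O. - (th x + th (R x)) / 2)"
    using fin by (simp only: prod_constant cis_prod)
  also have "(\<Sum>x\<in>?O. - (th x + th (R x)) / 2) = - ?S"
  proof -
    have "(\<Sum>x\<in>?O. - (th x + th (R x)) / 2) = (\<Sum>x\<in>?O. - (th x + th (R x))) / 2"
      by (simp only: sum_divide_distrib)
    also have "(\<Sum>x\<in>?O. - (th x + th (R x))) = - ((\<Sum>x\<in>?O. th x) + (\<Sum>x\<in>?O. th (R x)))"
      by (simp only: sum_negf sum.distrib)
    finally show ?thesis using sum_R_orbit[OF e, of th] by simp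
  qed
  finally have 1: "(\<Prod>x\<in>?O. - cis (- (th x + th (R x)) / 2)) = (-1) ^ card ?O * cis (- ?S)" .
  obtain k :: int where k: "(\<Sum>x\<in>?O. 2 * th x) = (2 * of_int k + 1) * (2 * pi)" using vcone[OF iso e] by blast
  have "(\<Sum>x\<in>?O. 2 * th x) = 2 * ?S" by (simp add: sum_distrib_left)
  then have "?S = (2 * of_int k + 1) * pi" using k by simp
  then have "cis (- ?S) = -1" using cis_odd_pi by simp
  then show ?thesis using 1 by simp
qed

lemma face_val:
  assumes e: "e \<in> E"
  shows "(\<Prod>x\<in>orbit (Fp E rv R) e. - \<i>) * (\<Prod>x\<in>orbit (Fp E rv R) e. inverse (- cis (- (th x + th (R x)) / 2)))
         = (-1) ^ (card (orbit (Fp E rv R) e) + 1)"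
proof -
  let ?O = "orbit (Fp E rv R) e"
  let ?S = "\<Sum>x\<in>?O. th x"
  let ?m = "card ?O"
  have fin: "finite ?O" using fin_orbit_Fp[OF e] .
  have "(\<Prod>x\<in>?O. inverse (- cis (- (th x + th (R x)) / 2))) = (\<Prod>x\<in>?O. (-1) * cis ((th x + th (R x)) / 2))"
    by (rule prod.cong) (simp_all add: minus_divide_left add.commute)
  also have "\<dots> = (\<Prod>x\<in>?O. -1) * (\<Prod>x\<in>?O. cis ((th x + th (R x)) / 2))"
    by (rule prod.distrib)
  also have "\<dots> = (-1) ^ ?m * cis (\<Sum>x\<in>?O. (th x + th (R x)) / 2)"
    using fin by (simp only: prod_constant cis_prod)
  also have "(\<Sum>x\<in>?O. (th x + th (R x)) / 2) = ?S"
  proof -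
    have "(\<Sum>x\<in>?O. (th x + th (R x)) / 2) = (\<Sum>x\<in>?O. (th x + th (R x))) / 2"
      by (simp only: sum_divide_distrib)
    also have "(\<Sum>x\<in>?O. (th x + th (R x))) = ((\<Sum>x\<in>?O. th x) + (\<Sum>x\<in>?O. th (R x)))"
      by (simp only: sum.distrib)
    finally show ?thesis using sum_Fp_orbit[OF e] by simp
  qed
  finally have 1: "(\<Prod>x\<in>?O. inverse (- cis (- (th x + th (R x)) / 2))) = (-1) ^ ?m * cis ?S" .
  obtain k :: int where k: "(\<Sum>x\<in>?O. pi - 2 * th x) = (2 * of_int k + 1) * (2 * pi)" using fcone[OF iso e] by blast
  have "(\<Sum>x\<in>?O. pi - 2 * th x) = real ?m * pi - 2 * ?S" by (simp add: sum_subtractf sum_distrib_left)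
  then have S: "?S = real ?m * (pi / 2) + (- ((2 * of_int k + 1) * pi))" using k by (simp add: algebra_simps)
  have "cis ?S = cis (pi / 2) ^ ?m * cis (- ((2 * of_int k + 1) * pi))"
    unfolding S cis_mult[symmetric] DeMoivre ..
  also have "\<dots> = - (\<i> ^ ?m)" using cis_odd_pi by simp
  finally have 2: "cis ?S = - (\<i> ^ ?m)" .
  have "(\<Prod>x\<in>?O. - \<i>) = (- \<i>) ^ ?m" by simp
  then have "(\<Prod>x\<in>?O. - \<i>) * (\<Prod>x\<in>?O. inverse (- cis (- (th x + th (R x)) / 2)))
       = (- \<i>) ^ ?m * ((-1) ^ ?m * - (\<i> ^ ?m))" using 1 2 by simp
  also have "\<dots> = - ((- \<i> * (-1) * \<i>) ^ ?m)"
  proof -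
    have "(- \<i> * (-1) * \<i>) ^ ?m = (- \<i>) ^ ?m * (-1) ^ ?m * \<i> ^ ?m" by (simp only: power_mult_distrib)
    then show ?thesis by (simp only:) (simp add: mult_ac)
  qed
  also have "\<dots> = (-1) ^ (?m + 1)" by simp
  finally show ?thesis .
qed


lemma union_val:
  fixes k1 k2 :: ckind and b1 b2 :: bool
  assumes "finite Ob" "(k1, b1) \<noteq> (k2, b2)"
    and "(\<Prod>x\<in>Ob. h (x, k1, b1)) * (\<Prod>x\<in>Ob. h (x, k2, b2)) = (-1) ^ (card Ob + 1)"
  shows "prod h ((\<lambda>x. (x, k1, b1)) ` Ob \<union> (\<lambda>x. (x, k2, b2)) ` Ob)
       = (-1) ^ (card ((\<lambda>x. (x, k1, b1)) ` Ob \<union> (\<lambda>x. (x, k2, b2)) ` Ob) div 2 + 1)"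
proof -
  have i1: "inj (\<lambda>x. (x, k1, b1))" and i2: "inj (\<lambda>x. (x, k2, b2))" by (auto intro: injI)
  have n: "\<And>x y. (x, k1, b1) \<noteq> (y, k2, b2)" using assms(2) by auto
  note tp = twostep_prod[OF assms(1) i1 i2 n]
  show ?thesis unfolding tp using assms(3) by simp
qed

lemma face_phase:
  assumes d: "d \<in> cdarts E"
  shows "(\<Prod>d'\<in>orbit (cface E rv R) d. dphi (cph R th) d') = (-1) ^ (card (orbit (cface E rv R) d) div 2 + 1)"
proof -
  obtain e k b where db: "d = (e, k, b)" and e: "e \<in> E" using d unfolding cdarts_def by auto
  have rect: "(\<Prod>x\<in>orbit rv e. dphi (cph R th) (x, Cos, True)) * (\<Prod>x\<in>orbit rv e. dphi (cph R th) (x, Sin, False))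
      = (-1) ^ (card (orbit rv e) + 1)"
  proof -
    have c: "card (orbit rv e) = 2" using orbit_rv[OF e] rv_neq[OF iso e] by simp
    have "(\<Prod>x\<in>orbit rv e. dphi (cph R th) (x, Cos, True)) * (\<Prod>x\<in>orbit rv e. dphi (cph R th) (x, Sin, False))
        = \<i> ^ card (orbit rv e)" by simp
    then show ?thesis unfolding c by simp
  qed
  have vert: "(\<Prod>x\<in>orbit R e. dphi (cph R th) (x, Cor, True)) * (\<Prod>x\<in>orbit R e. dphi (cph R th) (x, Cos, False))
      = (-1) ^ (card (orbit R e) + 1)"
    using vert_val[OF e] by simp
  have fc: "(\<Prod>x\<in>orbit (Fp E rv R) e. dphi (cph R th) (x, Sin, True)) * (\<Prod>x\<in>orbit (Fp E rv R) e. dphi (cph R th) (x, Cor, False))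
      = (-1) ^ (card (orbit (Fp E rv R) e) + 1)"
    using face_val[OF e] by simp
  have finrv: "finite (orbit rv e)" using orbit_rv[OF e] by simp
  note fR = fin_orbit_R[OF e] and fF = fin_orbit_Fp[OF e]
  show ?thesis
  proof (cases k)
    case Cos
    show ?thesis
    proof (cases b)
      case True
      then show ?thesis using db Cos orbit_rect(1)[OF e] union_val[OF finrv _ rect] by simp
    next
      case False
      then show ?thesis using db Cos orbit_vert(2)[OF e] union_val[OF fR _ vert] by simp
    qed
  next
    case Sin
    show ?thesis
    proof (cases b)
      case True
      then show ?thesis using db Sin orbit_facec(1)[OF e] union_val[OF fF _ fc] by simp
    next
      case False
      then show ?thesis using db Sin orbit_rect(2)[OF e] union_val[OF finrv _ rect] by simp
    qed
  next
    case Cor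
    show ?thesis
    proof (cases b)
      case True
      then show ?thesis using db Cor orbit_vert(1)[OF e] union_val[OF fR _ vert] by simp
    next
      case False
      then show ?thesis using db Cor orbit_facec(2)[OF e] union_val[OF fF _ fc] by simp
    qed
  qed
qed


lemma cface_in: "d \<in> cdarts E \<Longrightarrow> cface E rv R d \<in> cdarts E"
proof -
  assume "d \<in> cdarts E"
  then obtain e k b where db: "d = (e, k, b)" and e: "e \<in> E" unfolding cdarts_def by auto
  have "Fp E rv R e \<in> E" using Fp_in[OF iso e] .
  then show ?thesis using db e rv_in[OF iso e] R_in[OF iso e]
    by (cases k; cases b) (auto simp: cface_def cdarts_def Fp_def)
qed

lemma cface_img: "cface E rv R ` cdarts E \<subseteq> cdarts E" using cface_in by auto

lemma cface_orbit_sub: "d \<in> cdarts E \<Longrightarrow> orbit (cface E rv R) d \<subseteq> cdarts E"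
  using orbit_sub[OF cface_img] by auto

end

definition phi_of :: "'d set \<Rightarrow> ('d \<Rightarrow> 'd) \<Rightarrow> ('d \<Rightarrow> real) \<Rightarrow> ('d \<times> ckind \<Rightarrow> real) \<Rightarrow> 'd \<times> ckind \<Rightarrow> complex" where
  "phi_of E R th \<omega> = (\<lambda>(e, k). if e \<in> E then cph R th (e, k) * complex_of_real (\<omega> (e, k)) else undefined)"

lemma cph_norm: "norm (cph R th (e, k)) = 1"
  by (cases k) auto

lemma cph_nz: "cph R th (e, k) \<noteq> 0"
  using cph_norm[of R th e k] by auto

lemma pm1_inverse: "(w::real) = 1 \<or> w = -1 \<Longrightarrow> inverse (complex_of_real w) = complex_of_real w"
  by auto

lemma dphi_phi_of:
  assumes "\<forall>e\<in>E. \<forall>k. \<omega> (e, k) = 1 \<or> \<omega> (e, k) = -1" "d \<in> cdarts E"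
  shows "dphi (phi_of E R th \<omega>) d = complex_of_real (\<omega> (cedge d)) * dphi (cph R th) d"
proof -
  obtain e k b where db: "d = (e, k, b)" and e: "e \<in> E" using assms(2) unfolding cdarts_def by auto
  have w: "\<omega> (e, k) = 1 \<or> \<omega> (e, k) = -1" using assms(1) e by auto
  show ?thesis
  proof (cases b)
    case True then show ?thesis using db e by (simp add: phi_of_def)
  next
    case False
    then show ?thesis using db e pm1_inverse[OF w] by (simp add: phi_of_def mult.commute)
  qed
qed

lemma cis_shift: "cis (x + pi) = - cis x" "cis (x - pi) = - cis x"
  by (simp_all add: cis_mult[symmetric] cis_divide[symmetric])

lemma hol_cph:
  "inverse ((dphi (cph R th) d)\<^sup>2) = - hol_dart R th d"
proof -
  obtain e k b where db: "d = (e, k, b)" by (cases d) auto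
  have c1: "cis (- (th e + th (R e)) / 2) ^ 2 = cis (- (th e + th (R e)))"
  proof -
    have "real 2 * (- (th e + th (R e)) / 2) = - (th e + th (R e))" by simp
    then show ?thesis unfolding DeMoivre by metis
  qed
  show ?thesis
  proof (cases k)
    case Cos then show ?thesis using db by (cases b) (simp_all add: exp_cis3 exp_cis4)
  next
    case Sin then show ?thesis using db by (cases b) (simp_all add: exp_cis3 exp_cis4)
  next
    case Cor
    have h1: "- (pi + (pi - th (R e)) - (pi + th e)) = (th e + th (R e)) - pi" by simp
    have h2: "- (pi + (pi + th e) - (pi - th (R e))) = - (th e + th (R e)) - pi" by simp
    show ?thesis
    proof (cases b)
      case True
      have "hol_dart R th (e, Cor, True) = cis (- (pi + (pi - th (R e)) - (pi + th e)))"
        by (simp only: hol_dart.simps angB.simps angW.simps exp_cis3)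
      also have "\<dots> = - cis (th e + th (R e))" unfolding h1 cis_shift ..
      finally show ?thesis using db Cor c1 True by (simp add: power_mult_distrib add.commute)
    next
      case False
      have "hol_dart R th (e, Cor, False) = cis (- (pi + (pi + th e) - (pi - th (R e))))"
        by (simp only: hol_dart.simps angB.simps angW.simps exp_cis3)
      also have "\<dots> = - cis (- (th e + th (R e)))" unfolding h2 cis_shift ..
      finally show ?thesis using db Cor c1 False by (simp add: power_mult_distrib power_inverse[symmetric] add.commute)
    qed
  qed
qed


lemma alt_bool: "ctarget rv R x = corigin rv R y \<Longrightarrow> snd (snd y) = (\<not> snd (snd x))"
proof -
  assume h: "ctarget rv R x = corigin rv R y"
  obtain a1 k1 b1 where x: "x = (a1, k1, b1)" by (cases x) auto
  obtain a2 k2 b2 where y: "y = (a2, k2, b2)" by (cases y) auto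
  show ?thesis using h unfolding x y by (cases b1; cases b2) auto
qed

lemma closed_even:
  assumes "closed_path E rv R \<gamma>"
  shows "even (length \<gamma>)"
proof (rule ccontr)
  assume odd: "odd (length \<gamma>)"
  let ?b = "\<lambda>i. snd (snd (\<gamma> ! i))"
  have ne: "\<gamma> \<noteq> []" and ch: "\<And>i. Suc i < length \<gamma> \<Longrightarrow> ctarget rv R (\<gamma> ! i) = corigin rv R (\<gamma> ! Suc i)"
    and cl: "ctarget rv R (last \<gamma>) = corigin rv R (hd \<gamma>)"
    using assms unfolding closed_path_def by auto
  have b: "i < length \<gamma> \<Longrightarrow> ?b i = (?b 0 = even i)" for i
  proof (induction i)
    case 0 then show ?case by simp
  next
    case (Suc i)
    then have "?b (Suc i) = (\<not> ?b i)" using alt_bool[OF ch[of i]] by simp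
    then show ?case using Suc by simp
  qed
  let ?n = "length \<gamma>"
  have "last \<gamma> = \<gamma> ! (?n - 1)" using ne by (simp add: last_conv_nth)
  moreover have "hd \<gamma> = \<gamma> ! 0" using ne by (simp add: hd_conv_nth)
  ultimately have "?b 0 = (\<not> ?b (?n - 1))" using alt_bool[OF cl] by simp
  moreover have "even (?n - 1)" using odd ne by simp
  moreover have "?n - 1 < ?n" using ne by simp
  ultimately show False using b[of "?n - 1"] by simp
qed

lemma inv_sq_prod_list: "inverse ((prod_list (map f xs))\<^sup>2) = prod_list (map (\<lambda>d. inverse ((f d)\<^sup>2)) xs)"
  for f :: "'a \<Rightarrow> complex"
  by (induction xs) (simp_all add: power_mult_distrib)

lemma neg_prod_list: "prod_list (map (\<lambda>d. - (f d)) xs) = (-1) ^ length xs * prod_list (map f xs)"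
  for f :: "'a \<Rightarrow> complex"
  by (induction xs) simp_all

lemma dirac_phi_of:
  assumes iso: "isoradial E rv R th" and pos: "\<forall>e\<in>E. 0 < th e \<and> th e < pi / 2"
  shows "dirac_identity E rv R th \<omega> (phi_of E R th \<omega>)"
  unfolding dirac_identity_def
proof (intro allI ballI)
  fix g and e assume e: "e \<in> E"
  have th: "0 < th e" "th e < pi / 2" using pos e by auto
  have "0 < sin (2 * th e)" by (rule sin_gt_zero) (use th in auto)
  then have mu: "mu th e \<noteq> 0" unfolding mu_def by simp
  have thrv: "th (rv e) = th e" using th_rv[OF iso e] .
  have c3: "cis (- th e / 2) * cis (th e) * cis (- (th e + th (R e)) / 2) = cis (- th (R e) / 2)"
    by (simp add: cis_mult algebra_simps add_divide_distrib diff_divide_distrib)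
  show "kast_op rv R th \<omega> (\<lambda>x. exp (- \<i> * complex_of_real (th x) / 2) * g x) e =
         exp (- \<i> * complex_of_real (th e) / 2) * complex_of_real (mu th e) * dbar rv R th (phi_of E R th \<omega>) g e"
    unfolding kast_op_def dbar_def exp_cis2 exp_cis
    using e mu thrv c3
    by (simp add: phi_of_def field_simps)
qed


lemma dphi_sq:
  assumes "\<forall>e\<in>E. \<forall>k. \<omega> (e, k) = 1 \<or> \<omega> (e, k) = -1" "d \<in> cdarts E"
  shows "inverse ((dphi (phi_of E R th \<omega>) d)\<^sup>2) = - hol_dart R th d"
proof -
  obtain e k b where db: "d = (e, k, b)" and e: "e \<in> E" using assms(2) unfolding cdarts_def by auto
  have w0: "\<omega> (e, k) = 1 \<or> \<omega> (e, k) = -1" using assms(1) e by blast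
  have w: "(complex_of_real (\<omega> (cedge d)))\<^sup>2 = 1" using w0 db by (elim disjE) simp_all
  show ?thesis unfolding dphi_phi_of[OF assms] power_mult_distrib w using hol_cph[of R th d] by simp
qed

lemma spin_phi_of:
  assumes iso: "isoradial E rv R th" and K: "kasteleyn E rv R \<omega>"
  shows "spin_structure E rv R th (phi_of E R th \<omega>)"
proof -
  have pm: "\<forall>e\<in>E. \<forall>k. \<omega> (e, k) = 1 \<or> \<omega> (e, k) = -1" using K unfolding kasteleyn_def by auto
  have ext: "phi_of E R th \<omega> \<in> extensional (E \<times> UNIV)"
    unfolding extensional_def phi_of_def by auto
  have nrm: "\<forall>e\<in>E. \<forall>k. norm (phi_of E R th \<omega> (e, k)) = 1"
  proof (intro ballI allI)
    fix e k assume e: "e \<in> E"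
    have w0: "\<omega> (e, k) = 1 \<or> \<omega> (e, k) = -1" using pm e by blast
    have "norm (complex_of_real (\<omega> (e, k))) = 1" using w0 by (elim disjE) simp_all
    then show "norm (phi_of E R th \<omega> (e, k)) = 1" using e cph_norm[of R th e k] by (simp add: phi_of_def norm_mult)
  qed
  have face: "\<forall>d\<in>cdarts E. (\<Prod>d'\<in>orbit (cface E rv R) d. dphi (phi_of E R th \<omega>) d') = 1"
  proof
    fix d assume d: "d \<in> cdarts E"
    let ?O = "orbit (cface E rv R) d"
    have sub: "?O \<subseteq> cdarts E" using cface_orbit_sub[OF iso d] .
    have "(\<Prod>d'\<in>?O. dphi (phi_of E R th \<omega>) d') = (\<Prod>d'\<in>?O. complex_of_real (\<omega> (cedge d')) * dphi (cph R th) d')"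
      by (rule prod.cong) (use sub dphi_phi_of[OF pm] in auto)
    also have "\<dots> = complex_of_real (\<Prod>d'\<in>?O. \<omega> (cedge d')) * (\<Prod>d'\<in>?O. dphi (cph R th) d')"
      by (simp add: prod.distrib)
    also have "\<dots> = complex_of_real ((-1) ^ (card ?O div 2 + 1)) * (-1) ^ (card ?O div 2 + 1)"
      using K d face_phase[OF iso d] unfolding kasteleyn_def by simp
    also have "\<dots> = 1" by (simp add: power_mult_distrib[symmetric])
    finally show "(\<Prod>d'\<in>?O. dphi (phi_of E R th \<omega>) d') = 1" .
  qed
  have hol: "\<forall>\<gamma>. closed_path E rv R \<gamma> \<longrightarrow> inverse (path_phi (phi_of E R th \<omega>) \<gamma> ^ 2) = path_hol R th \<gamma>"
  proof (intro allI impI)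
    fix \<gamma> assume cp: "closed_path E rv R \<gamma>"
    have sub: "set \<gamma> \<subseteq> cdarts E" using cp unfolding closed_path_def by auto
    have "inverse (path_phi (phi_of E R th \<omega>) \<gamma> ^ 2) = prod_list (map (\<lambda>d. inverse ((dphi (phi_of E R th \<omega>) d)\<^sup>2)) \<gamma>)"
      unfolding path_phi_def by (rule inv_sq_prod_list)
    also have "\<dots> = prod_list (map (\<lambda>d. - hol_dart R th d) \<gamma>)"
      by (rule arg_cong[where f=prod_list], rule map_cong) (use sub dphi_sq[OF pm] in auto)
    also have "\<dots> = path_hol R th \<gamma>"
      unfolding neg_prod_list path_hol_def using closed_even[OF cp] by simp
    finally show "inverse (path_phi (phi_of E R th \<omega>) \<gamma> ^ 2) = path_hol R th \<gamma>" .
  qed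
  show ?thesis unfolding spin_structure_def using ext nrm face hol by blast
qed

lemma alg_core:
  fixes a b u :: complex and s wS wC :: real
  assumes na: "norm a = 1" and nu: "norm u = 1" and s: "0 < s" "s < 1"
    and wS: "wS = 1 \<or> wS = -1" and wC: "wC = 1 \<or> wC = -1"
    and lin: "\<i> * complex_of_real s * b - u * a = complex_of_real (wS * s + wC)"
    and sq: "b ^ 2 = - (u ^ 2 * a ^ 2)"
  shows "a = - complex_of_real wC * inverse u \<and> b = - \<i> * complex_of_real wS"
proof -
  have u0: "u \<noteq> 0" using nu by auto
  have "(b - \<i> * u * a) * (b + \<i> * u * a) = b ^ 2 + u ^ 2 * a ^ 2"
    by (simp add: algebra_simps power2_eq_square)
  also have "\<dots> = 0" using sq by simp
  finally have "b - \<i> * u * a = 0 \<or> b + \<i> * u * a = 0" by simp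
  then have "b = \<i> * u * a \<or> b = - (\<i> * u * a)"
    by (metis right_minus_eq eq_neg_iff_add_eq_0)
  then show ?thesis
  proof
    assume b: "b = \<i> * u * a"
    have "u * a * complex_of_real (1 + s) = - (\<i> * complex_of_real s * b - u * a)"
      unfolding b by (simp add: algebra_simps)
    also have "\<dots> = - complex_of_real (wS * s + wC)" using lin by simp
    finally have "u * a * complex_of_real (1 + s) = - complex_of_real (wS * s + wC)" .
    then have "norm (u * a) * (1 + s) = \<bar>wS * s + wC\<bar>"
      using s by (metis norm_minus_cancel norm_mult norm_of_real abs_of_pos add_pos_pos zero_less_one)
    then have abs: "\<bar>wS * s + wC\<bar> = 1 + s" using na nu by (simp add: norm_mult)
    have eq: "wS = wC" using wS wC abs s by auto
    have "u * a * complex_of_real (1 + s) = - complex_of_real wC * complex_of_real (1 + s)"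
      using \<open>u * a * complex_of_real (1 + s) = - complex_of_real (wS * s + wC)\<close> eq
      by (simp add: algebra_simps)
    then have ua: "u * a = - complex_of_real wC" using s
      by (metis mult_cancel_right of_real_eq_0_iff add_pos_pos zero_less_one less_irrefl)
    then have "a = - complex_of_real wC * inverse u" using u0 by (simp add: field_simps)
    moreover have "b = - \<i> * complex_of_real wS" using b ua eq by (simp add: algebra_simps)
    ultimately show ?thesis ..
  next
    assume b: "b = - (\<i> * u * a)"
    have "u * a * complex_of_real (s - 1) = \<i> * complex_of_real s * b - u * a"
      unfolding b by (simp add: algebra_simps)
    also have "\<dots> = complex_of_real (wS * s + wC)" using lin by simp
    finally have "u * a * complex_of_real (s - 1) = complex_of_real (wS * s + wC)" .
    then have "norm (u * a) * (1 - s) = \<bar>wS * s + wC\<bar>"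
      using s by (metis norm_mult norm_of_real abs_minus_commute abs_of_pos diff_gt_0_iff_gt)
    then have abs: "\<bar>wS * s + wC\<bar> = 1 - s" using na nu by (simp add: norm_mult)
    have eq: "wS = - wC" using wS wC abs s by auto
    have "u * a * complex_of_real (s - 1) = - complex_of_real wC * complex_of_real (s - 1)"
      using \<open>u * a * complex_of_real (s - 1) = complex_of_real (wS * s + wC)\<close> eq
      by (simp add: algebra_simps)
    then have ua: "u * a = - complex_of_real wC" using s
      by (metis mult_cancel_right of_real_eq_0_iff eq_iff_diff_eq_0 less_irrefl)
    then have "a = - complex_of_real wC * inverse u" using u0 by (simp add: field_simps)
    moreover have "b = - \<i> * complex_of_real wS" using b ua eq by (simp add: algebra_simps)
    ultimately show ?thesis ..
  qed
qed

lemma R_neq: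
  assumes iso: "isoradial E rv R th" and pos: "\<forall>e\<in>E. 0 < th e \<and> th e < pi / 2" and e: "e \<in> E"
  shows "R e \<noteq> e"
proof
  assume Re: "R e = e"
  have "(R ^^ n) e = e" for n by (induction n) (simp_all add: Re)
  then have "orbit R e = {e}" unfolding orbit_def by auto
  then obtain k :: int where k: "2 * th e = (2 * of_int k + 1) * (2 * pi)" using vcone[OF iso e] by auto
  have th: "0 < th e" "th e < pi / 2" using pos e by auto
  show False
  proof (cases "k \<ge> 0")
    case True
    then have "(2 * of_int k + 1) * (2 * pi) \<ge> 1 * (2 * pi)"
      by (intro mult_right_mono) auto
    then show False using k th by linarith
  next
    case False
    then have "of_int k \<le> (-1::real)" by simp
    then have "(2 * of_int k + 1) * (2 * pi) \<le> (-1) * (2 * pi)"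
      by (intro mult_right_mono) auto
    then show False using k th pi_gt_zero by linarith
  qed
qed

lemma unique_phi:
  assumes iso: "isoradial E rv R th" and pos: "\<forall>e\<in>E. 0 < th e \<and> th e < pi / 2"
    and K: "kasteleyn E rv R \<omega>" and S: "spin_structure E rv R th \<phi>" and D: "dirac_identity E rv R th \<omega> \<phi>"
  shows "\<phi> = phi_of E R th \<omega>"
proof -
  have pt: "\<phi> (e, k) = phi_of E R th \<omega> (e, k)" for e k
  proof (cases "e \<in> E")
    case False
    then have "\<phi> (e, k) = undefined" using S unfolding spin_structure_def extensional_def by auto
    then show ?thesis using False by (simp add: phi_of_def)
  next
    case e: True
    have th: "0 < th e" "th e < pi / 2" using pos e by auto
    have "0 < sin (2 * th e)" by (rule sin_gt_zero) (use th in auto)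
    then have mu: "complex_of_real (mu th e) \<noteq> 0" unfolding mu_def by simp
    have thrv: "th (rv e) = th e" using th_rv[OF iso e] .
    have "0 < cos (th e)" by (rule cos_gt_zero_pi) (use th pi_gt_zero in linarith)+
    then have cos0: "cos (th e) \<noteq> 0" by simp
    have sin0: "0 < sin (th e)" using th by (auto intro!: sin_gt_zero)
    have sin1: "sin (th e) < 1" using sin_monotone_2pi[of "th e" "pi / 2"] th by simp
    have key: "complex_of_real (\<omega> (e, Cos) * cos (th e)) * (cis (- th e / 2) * g e)
       + complex_of_real (\<omega> (e, Sin) * sin (th e)) * (cis (- th e / 2) * g (rv e))
       + complex_of_real (\<omega> (e, Cor)) * (cis (- th (R e) / 2) * g (R e))
       = cis (- th e / 2) * (\<phi> (e, Cos) * complex_of_real (cos (th e)) * g e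
          + \<i> * \<phi> (e, Sin) * complex_of_real (sin (th e)) * g (rv e)
          - cis (th e) * \<phi> (e, Cor) * g (R e))" for g
    proof -
      have "kast_op rv R th \<omega> (\<lambda>x. exp (- \<i> * complex_of_real (th x) / 2) * g x) e =
         exp (- \<i> * complex_of_real (th e) / 2) * complex_of_real (mu th e) * dbar rv R th \<phi> g e"
        using D e unfolding dirac_identity_def by blast
      moreover have "complex_of_real (mu th e) * dbar rv R th \<phi> g e =
          \<phi> (e, Cos) * complex_of_real (cos (th e)) * g e
          + \<i> * \<phi> (e, Sin) * complex_of_real (sin (th e)) * g (rv e)
          - exp (\<i> * complex_of_real (th e)) * \<phi> (e, Cor) * g (R e)"
        unfolding dbar_def using mu by simp
      ultimately have "kast_op rv R th \<omega> (\<lambda>x. exp (- \<i> * complex_of_real (th x) / 2) * g x) e =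
         exp (- \<i> * complex_of_real (th e) / 2) * (\<phi> (e, Cos) * complex_of_real (cos (th e)) * g e
          + \<i> * \<phi> (e, Sin) * complex_of_real (sin (th e)) * g (rv e)
          - exp (\<i> * complex_of_real (th e)) * \<phi> (e, Cor) * g (R e))"
        by (simp add: mult.assoc)
      then show ?thesis unfolding kast_op_def exp_cis2 exp_cis using thrv
        by (simp add: algebra_simps)
    qed
    have c0: "cis (- th e / 2) \<noteq> 0" by (metis cis_neq_zero)
    have ne1: "rv e \<noteq> e" using rv_neq[OF iso e] .
    have ne2: "R e \<noteq> e" using R_neq[OF iso pos e] .
    have wpm: "\<omega> (e, j) = 1 \<or> \<omega> (e, j) = -1" for j using K e unfolding kasteleyn_def by auto
    have eCos: "\<phi> (e, Cos) = complex_of_real (\<omega> (e, Cos))"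
    proof -
      have "complex_of_real (\<omega> (e, Cos) * cos (th e)) * cis (- th e / 2)
          = cis (- th e / 2) * (\<phi> (e, Cos) * complex_of_real (cos (th e)))"
        using key[of "\<lambda>x. if x = e then 1 else 0"] ne1 ne2 by simp
      then show ?thesis using c0 cos0 by (simp add: field_simps)
    qed
    have eSC: "\<phi> (e, Sin) = - \<i> * complex_of_real (\<omega> (e, Sin)) \<and>
               \<phi> (e, Cor) = - cis (- (th e + th (R e)) / 2) * complex_of_real (\<omega> (e, Cor))"
    proof (cases "R e = rv e")
      case False
      have "complex_of_real (\<omega> (e, Sin) * sin (th e)) * cis (- th e / 2)
          = cis (- th e / 2) * (\<i> * \<phi> (e, Sin) * complex_of_real (sin (th e)))"
        using key[of "\<lambda>x. if x = rv e then 1 else 0"] ne1 False by simp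
      then have 1: "\<phi> (e, Sin) = - \<i> * complex_of_real (\<omega> (e, Sin))" using c0 sin0
        by (simp add: field_simps)
      have "complex_of_real (\<omega> (e, Cor)) * cis (- th (R e) / 2)
          = - (cis (- th e / 2) * (cis (th e) * \<phi> (e, Cor)))"
        using key[of "\<lambda>x. if x = R e then 1 else 0"] ne2 False by simp
      then have "\<phi> (e, Cor) = - complex_of_real (\<omega> (e, Cor)) * (cis (- th (R e) / 2) / (cis (- th e / 2) * cis (th e)))"
        using c0 by (simp add: field_simps)
      also have "cis (- th (R e) / 2) / (cis (- th e / 2) * cis (th e)) = cis (- (th e + th (R e)) / 2)"
      proof -
        have q: "cis (- th (R e) / 2) / (cis (- th e / 2) * cis (th e)) = cis (- th (R e) / 2 - (- th e / 2 + th e))"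
          by (simp only: cis_mult cis_divide)
        have q2: "- th (R e) / 2 - (- th e / 2 + th e) = - (th e + th (R e)) / 2" by (simp add: field_simps)
        show ?thesis unfolding q q2 ..
      qed
      finally have 2: "\<phi> (e, Cor) = - cis (- (th e + th (R e)) / 2) * complex_of_real (\<omega> (e, Cor))"
        by simp
      show ?thesis using 1 2 ..
    next
      case True
      have thR: "th (R e) = th e" using True thrv by simp
      have H: "complex_of_real (\<omega> (e, Sin) * sin (th e)) * cis (- th e / 2)
          + complex_of_real (\<omega> (e, Cor)) * cis (- th e / 2)
          = cis (- th e / 2) * (\<i> * \<phi> (e, Sin) * complex_of_real (sin (th e)) - cis (th e) * \<phi> (e, Cor))"
        using key[of "\<lambda>x. if x = rv e then 1 else 0"] ne1 True thR by simp
      have id: "cis (- th e / 2) * (\<i> * complex_of_real (sin (th e)) * \<phi> (e, Sin) - cis (th e) * \<phi> (e, Cor))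
          - cis (- th e / 2) * complex_of_real (\<omega> (e, Sin) * sin (th e) + \<omega> (e, Cor))
          = cis (- th e / 2) * (\<i> * \<phi> (e, Sin) * complex_of_real (sin (th e)) - cis (th e) * \<phi> (e, Cor))
           - (complex_of_real (\<omega> (e, Sin) * sin (th e)) * cis (- th e / 2)
              + complex_of_real (\<omega> (e, Cor)) * cis (- th e / 2))"
        by (simp add: algebra_simps)
      have "cis (- th e / 2) * (\<i> * complex_of_real (sin (th e)) * \<phi> (e, Sin) - cis (th e) * \<phi> (e, Cor))
          = cis (- th e / 2) * complex_of_real (\<omega> (e, Sin) * sin (th e) + \<omega> (e, Cor))"
        using id H by simp
      then have lin: "\<i> * complex_of_real (sin (th e)) * \<phi> (e, Sin) - cis (th e) * \<phi> (e, Cor)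
          = complex_of_real (\<omega> (e, Sin) * sin (th e) + \<omega> (e, Cor))"
        using c0 by (metis mult_left_cancel)
      let ?\<gamma> = "[(e, Sin, True), (e, Cor, False)]"
      have cp: "closed_path E rv R ?\<gamma>"
        unfolding closed_path_def cdarts_def using e True by (auto simp: nth_Cons split: nat.splits)
      then have "inverse (path_phi \<phi> ?\<gamma> ^ 2) = path_hol R th ?\<gamma>"
        using S unfolding spin_structure_def by blast
      moreover have "path_hol R th ?\<gamma> = - cis (- (2 * th e))"
      proof -
        have h1: "hol_dart R th (e, Sin, True) = 1" by simp
        have h2: "- (pi + (pi + th e) - (pi - th (R e))) = - (2 * th e) - pi" using thR by simp
        have "hol_dart R th (e, Cor, False) = cis (- (pi + (pi + th e) - (pi - th (R e))))"
          by (simp only: hol_dart.simps angB.simps angW.simps exp_cis3)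
        also have "\<dots> = - cis (- (2 * th e))" unfolding h2 cis_shift ..
        finally show ?thesis unfolding path_hol_def using h1 by simp
      qed
      ultimately have hh: "inverse ((\<phi> (e, Sin) * inverse (\<phi> (e, Cor))) ^ 2) = - cis (- (2 * th e))"
        unfolding path_phi_def by simp
      have nS: "norm (\<phi> (e, Sin)) = 1" and nC: "norm (\<phi> (e, Cor)) = 1"
        using S e unfolding spin_structure_def by auto
      have "\<phi> (e, Sin) \<noteq> 0" "\<phi> (e, Cor) \<noteq> 0" using nS nC by auto
      have cc: "cis (th e) ^ 2 * cis (- (2 * th e)) = 1"
        by (simp add: DeMoivre cis_mult)
      have sq: "\<phi> (e, Sin) ^ 2 = - (cis (th e) ^ 2 * \<phi> (e, Cor) ^ 2)"
      proof -
        have "\<phi> (e, Cor) ^ 2 = - cis (- (2 * th e)) * \<phi> (e, Sin) ^ 2"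
          using hh \<open>\<phi> (e, Sin) \<noteq> 0\<close> \<open>\<phi> (e, Cor) \<noteq> 0\<close>
          by (simp add: field_simps power_mult_distrib power_inverse)
        then have "cis (th e) ^ 2 * \<phi> (e, Cor) ^ 2 = - (cis (th e) ^ 2 * cis (- (2 * th e))) * \<phi> (e, Sin) ^ 2"
          by simp
        then show ?thesis unfolding cc by simp
      qed
      have r: "\<phi> (e, Cor) = - complex_of_real (\<omega> (e, Cor)) * inverse (cis (th e)) \<and>
               \<phi> (e, Sin) = - \<i> * complex_of_real (\<omega> (e, Sin))"
        by (rule alg_core[OF nC _ sin0 sin1 wpm wpm lin sq]) simp
      have "cis (- (th e + th (R e)) / 2) = inverse (cis (th e))" using thR by simp
      then show ?thesis using r by simp
    qed
    show ?thesis
    proof (cases k)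
      case Cos then show ?thesis using e eCos by (simp add: phi_of_def)
    next
      case Sin then show ?thesis using e eSC by (simp add: phi_of_def)
    next
      case Cor then show ?thesis using e eSC by (simp add: phi_of_def mult.commute)
    qed
  qed
  show ?thesis
  proof (rule ext)
    fix x show "\<phi> x = phi_of E R th \<omega> x" using pt by (cases x) simp
  qed
qed


lemma kast_pm: "kasteleyn E rv R \<omega> \<Longrightarrow> e \<in> E \<Longrightarrow> \<omega> (e, k) = 1 \<or> \<omega> (e, k) = -1"
  unfolding kasteleyn_def by auto

lemma equiv_imp_coh:
  assumes K1: "kasteleyn E rv R \<omega>1" and K2: "kasteleyn E rv R \<omega>2"
    and eq: "kast_equiv E rv R \<omega>1 \<omega>2"
  shows "cohomologous E rv R (phi_of E R th \<omega>1) (phi_of E R th \<omega>2)"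
proof -
  obtain s :: "'a cvert \<Rightarrow> real" where s: "\<forall>v. s v = 1 \<or> s v = -1"
    and se: "\<forall>e\<in>E. \<forall>k. \<omega>2 (e, k) = s (Wh e) * \<omega>1 (e, k) * s (Bl (ctgt rv R k e))"
    using eq unfolding kast_equiv_def by blast
  show ?thesis unfolding cohomologous_def
  proof (intro exI[of _ "\<lambda>v. complex_of_real (s v)"] conjI allI ballI)
    fix v show "norm (complex_of_real (s v)) = 1" using s[rule_format, of v] by auto
  next
    fix e k assume e: "e \<in> E"
    have 1: "\<omega>2 (e, k) = s (Wh e) * \<omega>1 (e, k) * s (Bl (ctgt rv R k e))" using se e by blast
    have sw: "s (Wh e) = 1 \<or> s (Wh e) = -1" using s by blast
    show "phi_of E R th \<omega>2 (e, k) = phi_of E R th \<omega>1 (e, k) * complex_of_real (s (Bl (ctgt rv R k e))) / complex_of_real (s (Wh e))"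
      using e 1 sw by (elim disjE) (simp_all add: phi_of_def)
  qed
qed

lemma coh_imp_equiv:
  assumes iso: "isoradial E rv R th" and K1: "kasteleyn E rv R \<omega>1" and K2: "kasteleyn E rv R \<omega>2"
    and coh: "cohomologous E rv R (phi_of E R th \<omega>1) (phi_of E R th \<omega>2)"
  shows "kast_equiv E rv R \<omega>1 \<omega>2"
proof -
  obtain f :: "'a cvert \<Rightarrow> complex" where f: "\<forall>v. norm (f v) = 1"
    and fe: "\<forall>e\<in>E. \<forall>k. phi_of E R th \<omega>2 (e, k) = phi_of E R th \<omega>1 (e, k) * f (Bl (ctgt rv R k e)) / f (Wh e)"
    using coh unfolding cohomologous_def by blast
  have f0: "f v \<noteq> 0" for v using f[rule_format, of v] by auto
  have rel: "f (Bl (ctgt rv R k e)) = complex_of_real (\<omega>1 (e, k) * \<omega>2 (e, k)) * f (Wh e)" if e: "e \<in> E" for e k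
  proof -
    have "cph R th (e, k) * complex_of_real (\<omega>2 (e, k)) = cph R th (e, k) * complex_of_real (\<omega>1 (e, k)) * f (Bl (ctgt rv R k e)) / f (Wh e)"
      using fe e by (simp add: phi_of_def)
    then have "complex_of_real (\<omega>2 (e, k)) * f (Wh e) = complex_of_real (\<omega>1 (e, k)) * f (Bl (ctgt rv R k e))"
      using cph_nz[of R th e k] f0[of "Wh e"] by (simp add: field_simps)
    then have eqn: "complex_of_real (\<omega>2 (e, k)) * f (Wh e) = complex_of_real (\<omega>1 (e, k)) * f (Bl (ctgt rv R k e))" .
    have sq: "\<omega>1 (e, k) * \<omega>1 (e, k) = 1" using kast_pm[OF K1 e, of k] by auto
    have "complex_of_real (\<omega>1 (e, k) * \<omega>2 (e, k)) * f (Wh e) = complex_of_real (\<omega>1 (e, k)) * (complex_of_real (\<omega>2 (e, k)) * f (Wh e))"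
      by simp
    also have "\<dots> = complex_of_real (\<omega>1 (e, k) * \<omega>1 (e, k)) * f (Bl (ctgt rv R k e))" unfolding eqn by simp
    also have "\<dots> = f (Bl (ctgt rv R k e))" unfolding sq by simp
    finally show ?thesis by simp
  qed
  have pmrel: "f (Bl (ctgt rv R k e)) = f (Wh e) \<or> f (Bl (ctgt rv R k e)) = - f (Wh e)" if e: "e \<in> E" for e k
    using rel[OF e, of k] kast_pm[OF K1 e, of k] kast_pm[OF K2 e, of k] by (elim disjE) simp_all
  obtain e0 where e0: "e0 \<in> E" using iso_ne[OF iso] by blast
  define \<alpha> where "\<alpha> = f (Wh e0)"
  have a0: "\<alpha> \<noteq> - \<alpha>" using f0[of "Wh e0"] unfolding \<alpha>_def by (simp add: eq_neg_iff_add_eq_0)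
  have W: "f (Wh e) = \<alpha> \<or> f (Wh e) = - \<alpha>" if e: "e \<in> E" for e
  proof -
    have "(e0, e) \<in> ({(x, R x) | x. x \<in> E} \<union> {(x, rv x) | x. x \<in> E})\<^sup>*" using conn[OF iso e0 e] .
    then show ?thesis
    proof (induction rule: rtrancl_induct)
      case base then show ?case unfolding \<alpha>_def by simp
    next
      case (step y z)
      then obtain x where x: "x \<in> E" "y = x" "z = R x \<or> z = rv x" by blast
      show ?case
      proof (cases "z = R x")
        case True
        have a: "f (Bl (ctgt rv R Cor x)) = f (Wh x) \<or> f (Bl (ctgt rv R Cor x)) = - f (Wh x)" using pmrel[OF x(1)] .
        have b: "f (Bl (ctgt rv R Cos (R x))) = f (Wh (R x)) \<or> f (Bl (ctgt rv R Cos (R x))) = - f (Wh (R x))"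
          using pmrel[OF R_in[OF iso x(1)]] .
        show ?thesis using a b step.IH x True by (auto simp: minus_equation_iff)
      next
        case False
        then have z: "z = rv x" using x by simp
        have a: "f (Bl (ctgt rv R Sin x)) = f (Wh x) \<or> f (Bl (ctgt rv R Sin x)) = - f (Wh x)" using pmrel[OF x(1)] .
        have b: "f (Bl (ctgt rv R Cos (rv x))) = f (Wh (rv x)) \<or> f (Bl (ctgt rv R Cos (rv x))) = - f (Wh (rv x))"
          using pmrel[OF rv_in[OF iso x(1)]] .
        show ?thesis using a b step.IH x z by (auto simp: minus_equation_iff)
      qed
    qed
  qed
  define s :: "'a cvert \<Rightarrow> real" where "s v = (if f v = \<alpha> then 1 else -1)" for v
  show ?thesis unfolding kast_equiv_def
  proof (intro exI[of _ s] conjI allI ballI)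
    fix v show "s v = 1 \<or> s v = -1" unfolding s_def by simp
  next
    fix e k assume e: "e \<in> E"
    have w: "f (Wh e) = \<alpha> \<or> f (Wh e) = - \<alpha>" using W[OF e] .
    have b: "f (Bl (ctgt rv R k e)) = \<alpha> \<or> f (Bl (ctgt rv R k e)) = - \<alpha>" using W[OF e] pmrel[OF e, of k] by auto
    have r: "f (Bl (ctgt rv R k e)) = complex_of_real (\<omega>1 (e, k) * \<omega>2 (e, k)) * f (Wh e)" using rel[OF e] .
    have p1: "\<omega>1 (e, k) = 1 \<or> \<omega>1 (e, k) = -1" and p2: "\<omega>2 (e, k) = 1 \<or> \<omega>2 (e, k) = -1"
      using kast_pm[OF K1 e] kast_pm[OF K2 e] by auto
    have sig: "\<exists>\<sigma>. (\<sigma> = 1 \<or> \<sigma> = -1) \<and> f v = complex_of_real \<sigma> * \<alpha> \<and> s v = \<sigma>"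
      if "f v = \<alpha> \<or> f v = - \<alpha>" for v
      using that
    proof
      assume "f v = \<alpha>" then show ?thesis unfolding s_def by (intro exI[of _ 1]) simp
    next
      assume "f v = - \<alpha>" then show ?thesis unfolding s_def using a0 by (intro exI[of _ "-1"]) simp
    qed
    obtain \<sigma>1 where s1: "\<sigma>1 = 1 \<or> \<sigma>1 = -1" "f (Wh e) = complex_of_real \<sigma>1 * \<alpha>" "s (Wh e) = \<sigma>1"
      using sig[OF w] by blast
    obtain \<sigma>2 where s2: "\<sigma>2 = 1 \<or> \<sigma>2 = -1" "f (Bl (ctgt rv R k e)) = complex_of_real \<sigma>2 * \<alpha>" "s (Bl (ctgt rv R k e)) = \<sigma>2"
      using sig[OF b] by blast
    have al0: "\<alpha> \<noteq> 0" using a0 by auto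
    have "complex_of_real \<sigma>2 * \<alpha> = complex_of_real (\<omega>1 (e, k) * \<omega>2 (e, k) * \<sigma>1) * \<alpha>"
      using r s1(2) s2(2) by (simp add: mult.assoc)
    then have "complex_of_real \<sigma>2 = complex_of_real (\<omega>1 (e, k) * \<omega>2 (e, k) * \<sigma>1)"
      using al0 by (metis mult_cancel_right)
    then have q: "\<sigma>2 = \<omega>1 (e, k) * \<omega>2 (e, k) * \<sigma>1" using of_real_eq_iff by blast
    show "\<omega>2 (e, k) = s (Wh e) * \<omega>1 (e, k) * s (Bl (ctgt rv R k e))"
      unfolding s1(3) s2(3) q using p1 s1(1) by (elim disjE) simp_all
  qed
qed


section \<open>Walks\<close>

inductive walk :: "'d set \<Rightarrow> ('d \<Rightarrow> 'd) \<Rightarrow> ('d \<Rightarrow> 'd) \<Rightarrow> 'd cvert \<Rightarrow> 'd cdart list \<Rightarrow> 'd cvert \<Rightarrow> bool"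
  for E rv R where
  wnil: "walk E rv R v [] v"
| wsnoc: "walk E rv R u p v \<Longrightarrow> d \<in> cdarts E \<Longrightarrow> corigin rv R d = v \<Longrightarrow> walk E rv R u (p @ [d]) (ctarget rv R d)"

lemma walk_props:
  assumes "walk E rv R u p v"
  shows "set p \<subseteq> cdarts E \<and> (p = [] \<longrightarrow> u = v) \<and>
    (p \<noteq> [] \<longrightarrow> corigin rv R (hd p) = u \<and> ctarget rv R (last p) = v \<and>
       (\<forall>i. Suc i < length p \<longrightarrow> ctarget rv R (p ! i) = corigin rv R (p ! Suc i)))"
  using assms
proof (induction rule: walk.induct)
  case (wnil v) then show ?case by simp
next
  case (wsnoc u p v d)
  show ?case
  proof (cases "p = []")
    case True then show ?thesis using wsnoc by simp
  next
    case False
    have ch: "ctarget rv R ((p @ [d]) ! i) = corigin rv R ((p @ [d]) ! Suc i)" if i: "Suc i < length (p @ [d])" for i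
    proof (cases "Suc i < length p")
      case True then show ?thesis using wsnoc False by (simp add: nth_append)
    next
      case no: False
      then have si: "Suc i = length p" using i by simp
      then have ieq: "i = length p - 1" by simp
      have "(p @ [d]) ! i = last p" "(p @ [d]) ! Suc i = d"
        using False si unfolding ieq by (simp_all add: nth_append last_conv_nth)
      then show ?thesis using wsnoc False by simp
    qed
    show ?thesis using wsnoc False ch by simp
  qed
qed

lemma walk_closed: "walk E rv R u p u \<Longrightarrow> p \<noteq> [] \<Longrightarrow> closed_path E rv R p"
  using walk_props[of E rv R u p u] unfolding closed_path_def by auto

lemma walk_append: "walk E rv R v q w \<Longrightarrow> walk E rv R u p v \<Longrightarrow> walk E rv R u (p @ q) w"
proof (induction rule: walk.induct)
  case (wnil v) then show ?case by simp
next
  case (wsnoc v q w d)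
  then have "walk E rv R u (p @ q) w" by simp
  then show ?case using wsnoc walk.wsnoc[of E rv R u "p @ q" w d] by simp
qed

lemma crev_props: "corigin rv R (crev d) = ctarget rv R d" "ctarget rv R (crev d) = corigin rv R d"
  "d \<in> cdarts E \<Longrightarrow> crev d \<in> cdarts E"
proof -
  obtain a k b where d: "d = (a, k, b)" by (cases d) auto
  show "corigin rv R (crev d) = ctarget rv R d" "ctarget rv R (crev d) = corigin rv R d"
    unfolding d by (cases b; simp)+
  show "d \<in> cdarts E \<Longrightarrow> crev d \<in> cdarts E" unfolding d cdarts_def by simp
qed

lemma walk_single: "d \<in> cdarts E \<Longrightarrow> walk E rv R (corigin rv R d) [d] (ctarget rv R d)"
  using walk.wsnoc[OF walk.wnil, of d E rv R "corigin rv R d"] by simp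

lemma walk_rev: "walk E rv R u p v \<Longrightarrow> walk E rv R v (rev (map crev p)) u"
proof (induction rule: walk.induct)
  case (wnil v) then show ?case by (simp add: walk.wnil)
next
  case (wsnoc u p v d)
  have "walk E rv R (ctarget rv R d) [crev d] v"
    using walk_single[OF crev_props(3)[OF wsnoc(2)], of rv R] crev_props(1,2)[of rv R d] wsnoc(3) by simp
  from walk_append[OF wsnoc(4) this] show ?case by simp
qed


lemma norm_prod_list1: "(\<forall>x\<in>set xs. norm (f x) = 1) \<Longrightarrow> norm (prod_list (map f xs)) = (1::real)"
  for f :: "'a \<Rightarrow> complex"
  by (induction xs) (simp_all add: norm_mult)

lemma prod_list_inv: "prod_list (map (\<lambda>x. inverse (f x)) xs) = inverse (prod_list (map f xs))"
  for f :: "'a \<Rightarrow> complex"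
  by (induction xs) simp_all

lemma prod_list_rev_map: "prod_list (map f (rev xs)) = prod_list (map f xs)"
  for f :: "'a \<Rightarrow> complex"
  by (induction xs) (simp_all add: mult.commute)

lemma potential:
  fixes \<Psi> :: "'d cdart \<Rightarrow> complex"
  assumes inv: "\<forall>d\<in>cdarts E. \<Psi> (crev d) = inverse (\<Psi> d)"
    and nrm: "\<forall>d\<in>cdarts E. norm (\<Psi> d) = 1"
    and cl: "\<forall>\<gamma>. closed_path E rv R \<gamma> \<longrightarrow> prod_list (map \<Psi> \<gamma>) = 1"
    and reach: "\<forall>d\<in>cdarts E. \<exists>p. walk E rv R v0 p (corigin rv R d)"
  shows "\<exists>h. (\<forall>v. norm (h v) = 1) \<and> (\<forall>d\<in>cdarts E. h (ctarget rv R d) = h (corigin rv R d) * \<Psi> d)"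
proof -
  let ?P = "\<lambda>p. prod_list (map \<Psi> p)"
  have pn: "walk E rv R u p v \<Longrightarrow> norm (?P p) = 1" for u p v
    using walk_props[of E rv R u p v] nrm by (intro norm_prod_list1) auto
  have wd: "?P p = ?P q" if p: "walk E rv R v0 p v" and q: "walk E rv R v0 q v" for p q v
  proof -
    have qs: "set q \<subseteq> cdarts E" using walk_props[OF q] by simp
    have w: "walk E rv R v0 (p @ rev (map crev q)) v0" using walk_append[OF walk_rev[OF q] p] .
    have "?P (rev (map crev q)) = ?P (map crev q)" by (simp only: prod_list_rev_map)
    also have "\<dots> = prod_list (map (\<lambda>d. inverse (\<Psi> d)) q)"
      by (simp add: o_def) (rule arg_cong[where f=prod_list], rule map_cong, use qs inv in auto)
    also have "\<dots> = inverse (?P q)" by (rule prod_list_inv)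
    finally have rq: "?P (rev (map crev q)) = inverse (?P q)" .
    have nq: "?P q \<noteq> 0" using pn[OF q] by auto
    show ?thesis
    proof (cases "p @ rev (map crev q) = []")
      case True then show ?thesis by simp
    next
      case False
      then have "?P (p @ rev (map crev q)) = 1" using cl walk_closed[OF w] by blast
      then have "?P p * inverse (?P q) = 1" using rq by simp
      then show ?thesis using nq by (simp add: field_simps)
    qed
  qed
  define h where "h v = (if \<exists>p. walk E rv R v0 p v then ?P (SOME p. walk E rv R v0 p v) else 1)" for v
  have hw: "walk E rv R v0 p v \<Longrightarrow> h v = ?P p" for p v
  proof -
    assume p: "walk E rv R v0 p v"
    then have sp: "walk E rv R v0 (SOME p. walk E rv R v0 p v) v" by (rule someI)
    have ex: "\<exists>p. walk E rv R v0 p v" using p by blast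
    have "h v = ?P (SOME p. walk E rv R v0 p v)" unfolding h_def using ex by simp
    also have "\<dots> = ?P p" using wd[OF sp p] .
    finally show "h v = ?P p" .
  qed
  show ?thesis
  proof (intro exI[of _ h] conjI allI ballI)
    fix v show "norm (h v) = 1"
    proof (cases "\<exists>p. walk E rv R v0 p v")
      case True
      then obtain p where "walk E rv R v0 p v" by blast
      then show ?thesis using hw pn by simp
    next
      case False then show ?thesis unfolding h_def by simp
    qed
  next
    fix d assume d: "d \<in> cdarts E"
    obtain p where p: "walk E rv R v0 p (corigin rv R d)" using reach d by blast
    have "walk E rv R v0 (p @ [d]) (ctarget rv R d)" using walk.wsnoc[OF p d] by simp
    then have "h (ctarget rv R d) = ?P (p @ [d])" by (rule hw)
    then show "h (ctarget rv R d) = h (corigin rv R d) * \<Psi> d" using hw[OF p] by simp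
  qed
qed

lemma reach:
  assumes iso: "isoradial E rv R th" and e0: "e0 \<in> E"
  shows "\<forall>d\<in>cdarts E. \<exists>p. walk E rv R (Wh e0) p (corigin rv R d)"
proof -
  have W: "\<exists>p. walk E rv R (Wh e0) p (Wh e)" if e: "e \<in> E" for e
  proof -
    have "(e0, e) \<in> ({(x, R x) | x. x \<in> E} \<union> {(x, rv x) | x. x \<in> E})\<^sup>*" using conn[OF iso e0 e] .
    then show ?thesis
    proof (induction rule: rtrancl_induct)
      case base show ?case by (rule exI, rule walk.wnil)
    next
      case (step y z)
      then obtain x where x: "x \<in> E" "y = x" "z = R x \<or> z = rv x" by blast
      obtain p where p: "walk E rv R (Wh e0) p (Wh x)" using step.IH x by blast
      show ?case
      proof (cases "z = R x")
        case True
        have d1: "(x, Cor, True) \<in> cdarts E" "(R x, Cos, False) \<in> cdarts E"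
          using x R_in[OF iso x(1)] by (auto simp: cdarts_def)
        have "walk E rv R (Wh e0) (p @ [(x, Cor, True)]) (Bl (R x))" using walk.wsnoc[OF p d1(1)] by simp
        from walk.wsnoc[OF this d1(2)] show ?thesis using True by auto
      next
        case False
        then have z: "z = rv x" using x by simp
        have d1: "(x, Sin, True) \<in> cdarts E" "(rv x, Cos, False) \<in> cdarts E"
          using x rv_in[OF iso x(1)] by (auto simp: cdarts_def)
        have "walk E rv R (Wh e0) (p @ [(x, Sin, True)]) (Bl (rv x))" using walk.wsnoc[OF p d1(1)] by simp
        from walk.wsnoc[OF this d1(2)] show ?thesis using z by auto
      qed
    qed
  qed
  show ?thesis
  proof
    fix d assume d: "d \<in> cdarts E"
    obtain e k b where db: "d = (e, k, b)" and e: "e \<in> E" using d unfolding cdarts_def by auto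
    obtain p where p: "walk E rv R (Wh e0) p (Wh e)" using W[OF e] by blast
    show "\<exists>p. walk E rv R (Wh e0) p (corigin rv R d)"
    proof (cases b)
      case True then show ?thesis using p db by auto
    next
      case False
      have "(e, k, True) \<in> cdarts E" using e by (simp add: cdarts_def)
      from walk.wsnoc[OF p this] show ?thesis using db False by auto
    qed
  qed
qed


lemma twostep_period:
  assumes fa: "\<And>y. f (a y) = b (g y)" and fb: "\<And>y. f (b y) = a y" and p: "p > 0" "(g ^^ p) x = x"
  shows "\<exists>q>0. (f ^^ q) (a x) = a x" "\<exists>q>0. (f ^^ q) (b x) = b x"
  using twostep_iter[of f a b g p x, OF fa fb] p by (auto intro!: exI[of _ "2 * p"])

lemma finite_cdarts: "finite E \<Longrightarrow> finite (cdarts E)"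
proof -
  assume "finite E"
  moreover have "finite (UNIV :: (ckind \<times> bool) set)"
    using finite_cartesian_product[OF finite_ckind finite_UNIV] by (simp add: UNIV_Times_UNIV)
  ultimately show ?thesis unfolding cdarts_def by simp
qed

context
  fixes E :: "'d set" and rv R :: "'d \<Rightarrow> 'd" and th :: "'d \<Rightarrow> real"
  assumes iso: "isoradial E rv R th"
begin

lemma cface_period: "d \<in> cdarts E \<Longrightarrow> \<exists>p>0. (cface E rv R ^^ p) d = d"
proof -
  assume "d \<in> cdarts E"
  then obtain e k b where db: "d = (e, k, b)" and e: "e \<in> E" unfolding cdarts_def by auto
  have prv: "(rv ^^ 2) e = e" using rv_rv[OF iso e] by (simp add: numeral_2_eq_2)
  obtain pR where pR: "pR > 0" "(R ^^ pR) e = e" using R_period[OF iso e] by blast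
  obtain pF where pF: "pF > 0" "(Fp E rv R ^^ pF) e = e" using Fp_period[OF iso e] by blast
  note r = twostep_period[where f="cface E rv R" and a="\<lambda>x. (x, Cos, True)" and b="\<lambda>x. (x, Sin, False)" and g=rv and p=2 and x=e]
  note v = twostep_period[where f="cface E rv R" and a="\<lambda>x. (x, Cor, True)" and b="\<lambda>x. (x, Cos, False)" and g=R and p=pR and x=e]
  note f = twostep_period[where f="cface E rv R" and a="\<lambda>x. (x, Sin, True)" and b="\<lambda>x. (x, Cor, False)" and g="Fp E rv R" and p=pF and x=e]
  have r1: "\<exists>q>0. (cface E rv R ^^ q) (e, Cos, True) = (e, Cos, True)"
    and r2: "\<exists>q>0. (cface E rv R ^^ q) (e, Sin, False) = (e, Sin, False)"
    using r prv by (simp_all add: cface_def)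
  have v1: "\<exists>q>0. (cface E rv R ^^ q) (e, Cor, True) = (e, Cor, True)"
    and v2: "\<exists>q>0. (cface E rv R ^^ q) (e, Cos, False) = (e, Cos, False)"
    using v pR by (simp_all add: cface_def)
  have f1: "\<exists>q>0. (cface E rv R ^^ q) (e, Sin, True) = (e, Sin, True)"
    and f2: "\<exists>q>0. (cface E rv R ^^ q) (e, Cor, False) = (e, Cor, False)"
    using f pF by (simp_all add: cface_def Fp_def)
  show ?thesis using db r1 r2 v1 v2 f1 f2 by (cases k; cases b) auto
qed

lemma cface_orbit_perm:
  assumes d: "d \<in> cdarts E"
  shows "cface E rv R ` orbit (cface E rv R) d = orbit (cface E rv R) d"
    and "inj_on (cface E rv R) (orbit (cface E rv R) d)"
    and "finite (orbit (cface E rv R) d)"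
proof -
  show img: "cface E rv R ` orbit (cface E rv R) d = orbit (cface E rv R) d"
    using cface_period[OF d] orbit_image by metis
  show fin: "finite (orbit (cface E rv R) d)"
    using cface_orbit_sub[OF iso d] finite_cdarts[OF iso_fin[OF iso]] finite_subset by blast
  show "inj_on (cface E rv R) (orbit (cface E rv R) d)"
    using img by (intro eq_card_imp_inj_on[OF fin]) simp
qed

lemma tgt_org: "d \<in> cdarts E \<Longrightarrow> ctarget rv R d = corigin rv R (cface E rv R d)"
proof -
  assume "d \<in> cdarts E"
  then obtain e k b where db: "d = (e, k, b)" and e: "e \<in> E" unfolding cdarts_def by auto
  show ?thesis using db rv_rv[OF iso e] R_Fp[OF iso e]
    by (cases k; cases b) (simp_all add: cface_def Fp_def)
qed

lemma coboundary_face: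
  fixes s :: "'d cvert \<Rightarrow> complex"
  assumes d: "d \<in> cdarts E" and s0: "\<forall>v. s v \<noteq> 0"
  shows "(\<Prod>d'\<in>orbit (cface E rv R) d. s (corigin rv R d') * inverse (s (ctarget rv R d'))) = 1"
proof -
  let ?O = "orbit (cface E rv R) d"
  let ?f = "cface E rv R"
  note pp = cface_orbit_perm[OF d]
  have sub: "?O \<subseteq> cdarts E" using cface_orbit_sub[OF iso d] .
  have "(\<Prod>d'\<in>?O. s (ctarget rv R d')) = (\<Prod>d'\<in>?O. s (corigin rv R (?f d')))"
    by (rule prod.cong) (use sub tgt_org in auto)
  also have "\<dots> = (\<Prod>d'\<in>?f ` ?O. s (corigin rv R d'))"
    using prod.reindex[OF pp(2), of "\<lambda>d'. s (corigin rv R d')"] by (simp add: o_def)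
  also have "\<dots> = (\<Prod>d'\<in>?O. s (corigin rv R d'))" using pp(1) by simp
  finally have eq: "(\<Prod>d'\<in>?O. s (ctarget rv R d')) = (\<Prod>d'\<in>?O. s (corigin rv R d'))" .
  have nz: "(\<Prod>d'\<in>?O. s (corigin rv R d')) \<noteq> 0" using s0 pp(3) by simp
  have "(\<Prod>d'\<in>?O. s (corigin rv R d') * inverse (s (ctarget rv R d')))
      = (\<Prod>d'\<in>?O. s (corigin rv R d')) * inverse (\<Prod>d'\<in>?O. s (ctarget rv R d'))"
    using prod_inversef[of "\<lambda>d'. s (ctarget rv R d')" ?O] by (simp add: prod.distrib o_def)
  also have "\<dots> = 1" using eq nz by simp
  finally show ?thesis .
qed

end


lemma dphi_crev: "dphi f (crev d) = inverse (dphi f d)"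
proof -
  obtain e k b where "d = (e, k, b)" by (cases d) auto
  then show ?thesis by (cases b) simp_all
qed

lemma prod_list_sq_div: "prod_list (map (\<lambda>d. (f d * inverse (g d))\<^sup>2) xs)
    = (prod_list (map f xs))\<^sup>2 * inverse ((prod_list (map g xs))\<^sup>2)"
  for f g :: "'a \<Rightarrow> complex"
  by (induction xs) (simp_all add: power_mult_distrib field_simps)

lemma part3:
  assumes iso: "isoradial E rv R th" and pos: "\<forall>e\<in>E. 0 < th e \<and> th e < pi / 2"
    and S: "spin_structure E rv R th \<phi>"
  shows "\<exists>\<omega> \<phi>'. kasteleyn E rv R \<omega> \<and> spin_structure E rv R th \<phi>' \<and>
                     dirac_identity E rv R th \<omega> \<phi>' \<and> cohomologous E rv R \<phi>' \<phi>"
proof -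
  let ?C = "dphi (cph R th)"
  define \<Psi> where "\<Psi> d = (dphi \<phi> d * inverse (?C d))\<^sup>2" for d
  have ext\<phi>: "\<phi> \<in> extensional (E \<times> UNIV)" and n\<phi>: "\<forall>e\<in>E. \<forall>k. norm (\<phi> (e, k)) = 1"
    and F\<phi>: "\<forall>d\<in>cdarts E. (\<Prod>d'\<in>orbit (cface E rv R) d. dphi \<phi> d') = 1"
    and H\<phi>: "\<forall>\<gamma>. closed_path E rv R \<gamma> \<longrightarrow> inverse (path_phi \<phi> \<gamma> ^ 2) = path_hol R th \<gamma>"
    using S unfolding spin_structure_def by auto
  have ndphi: "norm (dphi \<phi> d) = 1" if dd: "d \<in> cdarts E" for d
  proof -
    obtain e k b where "d = (e, k, b)" "e \<in> E" using dd unfolding cdarts_def by auto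
    then show ?thesis using n\<phi> by (cases b) (simp_all add: norm_inverse)
  qed
  have nC: "norm (?C d) = 1" for d
  proof -
    obtain e k b where "d = (e, k, b)" by (cases d) auto
    then show ?thesis using cph_norm[of R th e k] by (cases b) (simp_all add: norm_inverse)
  qed
  have inv: "\<forall>d\<in>cdarts E. \<Psi> (crev d) = inverse (\<Psi> d)"
    unfolding \<Psi>_def dphi_crev by (simp add: power_mult_distrib field_simps)
  have nrm: "\<forall>d\<in>cdarts E. norm (\<Psi> d) = 1"
    unfolding \<Psi>_def using ndphi nC by (simp add: norm_mult norm_power norm_inverse)
  have cl: "\<forall>\<gamma>. closed_path E rv R \<gamma> \<longrightarrow> prod_list (map \<Psi> \<gamma>) = 1"
  proof (intro allI impI)
    fix \<gamma> assume cp: "closed_path E rv R \<gamma>"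
    have sub: "set \<gamma> \<subseteq> cdarts E" using cp unfolding closed_path_def by auto
    have "inverse ((prod_list (map ?C \<gamma>))\<^sup>2) = prod_list (map (\<lambda>d. inverse ((?C d)\<^sup>2)) \<gamma>)"
      by (rule inv_sq_prod_list)
    also have "\<dots> = prod_list (map (\<lambda>d. - hol_dart R th d) \<gamma>)" by (simp add: hol_cph)
    also have "\<dots> = path_hol R th \<gamma>" unfolding neg_prod_list path_hol_def using closed_even[OF cp] by simp
    also have "\<dots> = inverse (path_phi \<phi> \<gamma> ^ 2)" using H\<phi> cp by simp
    finally have 1: "inverse ((prod_list (map ?C \<gamma>))\<^sup>2) = inverse (path_phi \<phi> \<gamma> ^ 2)" .
    have "norm (path_phi \<phi> \<gamma>) = 1" unfolding path_phi_def using sub ndphi by (intro norm_prod_list1) auto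
    then have nz: "path_phi \<phi> \<gamma> \<noteq> 0" by auto
    have "prod_list (map \<Psi> \<gamma>) = (path_phi \<phi> \<gamma>)\<^sup>2 * inverse ((prod_list (map ?C \<gamma>))\<^sup>2)"
      unfolding \<Psi>_def path_phi_def by (rule prod_list_sq_div)
    also have "\<dots> = 1" unfolding 1 using nz by simp
    finally show "prod_list (map \<Psi> \<gamma>) = 1" .
  qed
  obtain e0 where e0: "e0 \<in> E" using iso_ne[OF iso] by blast
  obtain h where hn: "\<forall>v. norm (h v) = 1" and hd: "\<forall>d\<in>cdarts E. h (ctarget rv R d) = h (corigin rv R d) * \<Psi> d"
    using potential[OF inv nrm cl reach[OF iso e0]] by blast
  define sq where "sq v = csqrt (h v)" for v
  have sqn: "norm (sq v) = 1" for v unfolding sq_def using hn by simp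
  have sq0: "sq v \<noteq> 0" for v using sqn[of v] by auto
  have sq2: "(sq v)\<^sup>2 = h v" for v unfolding sq_def by simp
  define z where "z e k = \<phi> (e, k) * inverse (cph R th (e, k)) * sq (Wh e) * inverse (sq (Bl (ctgt rv R k e)))" for e k
  have z2: "z e k = 1 \<or> z e k = -1" if e: "e \<in> E" for e k
  proof -
    have d: "(e, k, True) \<in> cdarts E" using e by (simp add: cdarts_def)
    have hb: "h (Bl (ctgt rv R k e)) = h (Wh e) * \<Psi> (e, k, True)" using hd d by auto
    have h0: "h v \<noteq> 0" for v using hn[rule_format, of v] by auto
    have "\<Psi> (e, k, True) \<noteq> 0" using nrm d by auto
    have "(z e k)\<^sup>2 = \<Psi> (e, k, True) * h (Wh e) * inverse (h (Bl (ctgt rv R k e)))"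
      unfolding z_def \<Psi>_def by (simp add: power_mult_distrib sq2 power_inverse)
    also have "\<dots> = 1" unfolding hb using h0 \<open>\<Psi> (e, k, True) \<noteq> 0\<close> by (simp add: field_simps)
    finally show ?thesis by (simp add: power2_eq_1_iff)
  qed
  define \<omega> :: "'a \<times> ckind \<Rightarrow> real" where "\<omega> x = (if fst x \<in> E then Re (z (fst x) (snd x)) else undefined)" for x
  have \<omega>z: "complex_of_real (\<omega> (e, k)) = z e k" if e: "e \<in> E" for e k
    using z2[OF e, of k] e unfolding \<omega>_def by auto
  have \<omega>pm: "\<forall>e\<in>E. \<forall>k. \<omega> (e, k) = 1 \<or> \<omega> (e, k) = -1"
  proof (intro ballI allI)
    fix e k assume e: "e \<in> E"
    show "\<omega> (e, k) = 1 \<or> \<omega> (e, k) = -1" using z2[OF e, of k] e unfolding \<omega>_def by auto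
  qed
  define \<phi>' where "\<phi>' = phi_of E R th \<omega>"
  have \<phi>'e: "\<phi>' (e, k) = \<phi> (e, k) * sq (Wh e) * inverse (sq (Bl (ctgt rv R k e)))" if e: "e \<in> E" for e k
    unfolding \<phi>'_def phi_of_def using e \<omega>z[OF e, of k] cph_nz[of R th e k] by (simp add: z_def field_simps)
  have pw: "dphi \<phi>' d = dphi \<phi> d * (sq (corigin rv R d) * inverse (sq (ctarget rv R d)))" if d: "d \<in> cdarts E" for d
  proof -
    obtain e k b where db: "d = (e, k, b)" and e: "e \<in> E" using d unfolding cdarts_def by auto
    have "norm (\<phi> (e, k)) = 1" using n\<phi> e by blast
    then have p0: "\<phi> (e, k) \<noteq> 0" by auto
    have p1: "\<phi>' (e, k) \<noteq> 0" using \<phi>'e[OF e, of k] p0 sq0 by simp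
    show ?thesis using \<phi>'e[OF e, of k] db sq0 p0 p1 by (cases b) (simp_all add: field_simps)
  qed
  have K: "kasteleyn E rv R \<omega>"
    unfolding kasteleyn_def
  proof (intro conjI)
    show "\<omega> \<in> extensional (E \<times> UNIV)" unfolding extensional_def \<omega>_def by auto
    show "\<forall>e\<in>E. \<forall>k. \<omega> (e, k) = 1 \<or> \<omega> (e, k) = -1" using \<omega>pm .
    show "\<forall>d\<in>cdarts E. (\<Prod>d'\<in>orbit (cface E rv R) d. \<omega> (cedge d')) = (-1) ^ (card (orbit (cface E rv R) d) div 2 + 1)"
    proof
    fix d assume d: "d \<in> cdarts E"
    let ?O = "orbit (cface E rv R) d"
    have sub: "?O \<subseteq> cdarts E" using cface_orbit_sub[OF iso d] .
    have "(\<Prod>d'\<in>?O. dphi \<phi>' d') = (\<Prod>d'\<in>?O. dphi \<phi> d' * (sq (corigin rv R d') * inverse (sq (ctarget rv R d'))))"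
      by (rule prod.cong) (use sub pw in auto)
    also have "\<dots> = (\<Prod>d'\<in>?O. dphi \<phi> d') * (\<Prod>d'\<in>?O. sq (corigin rv R d') * inverse (sq (ctarget rv R d')))"
      by (rule prod.distrib)
    also have "\<dots> = 1" using F\<phi> d coboundary_face[OF iso d] sq0 by simp
    finally have 1: "(\<Prod>d'\<in>?O. dphi \<phi>' d') = 1" .
    have "(\<Prod>d'\<in>?O. dphi \<phi>' d') = (\<Prod>d'\<in>?O. complex_of_real (\<omega> (cedge d')) * ?C d')"
      by (rule prod.cong) (use sub dphi_phi_of[OF \<omega>pm] in \<open>auto simp: \<phi>'_def\<close>)
    also have "\<dots> = complex_of_real (\<Prod>d'\<in>?O. \<omega> (cedge d')) * (-1) ^ (card ?O div 2 + 1)"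
      using face_phase[OF iso d] by (simp add: prod.distrib)
    finally have "complex_of_real (\<Prod>d'\<in>?O. \<omega> (cedge d')) * (-1) ^ (card ?O div 2 + 1) = 1" using 1 by simp
    then have cx: "complex_of_real (\<Prod>d'\<in>?O. \<omega> (cedge d')) * (-1) ^ (card ?O div 2 + 1) = 1" .
    have xx: "((-1::complex) ^ (card ?O div 2 + 1)) * (-1) ^ (card ?O div 2 + 1) = 1"
      by (simp add: power_mult_distrib[symmetric])
    have "complex_of_real (\<Prod>d'\<in>?O. \<omega> (cedge d'))
        = complex_of_real (\<Prod>d'\<in>?O. \<omega> (cedge d')) * (((-1::complex) ^ (card ?O div 2 + 1)) * (-1) ^ (card ?O div 2 + 1))"
      unfolding xx by simp
    also have "\<dots> = (-1) ^ (card ?O div 2 + 1)" unfolding mult.assoc[symmetric] cx by simp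
    finally have "complex_of_real (\<Prod>d'\<in>?O. \<omega> (cedge d')) = (-1) ^ (card ?O div 2 + 1)" .
    then have "complex_of_real (\<Prod>d'\<in>?O. \<omega> (cedge d')) = complex_of_real ((-1) ^ (card ?O div 2 + 1))" by simp
    then show "(\<Prod>d'\<in>?O. \<omega> (cedge d')) = (-1) ^ (card ?O div 2 + 1)" using of_real_eq_iff by blast
  qed
  qed
  have coh: "cohomologous E rv R \<phi>' \<phi>"
    unfolding cohomologous_def
  proof (intro exI[of _ sq] conjI allI ballI)
    fix v show "norm (sq v) = 1" by (rule sqn)
  next
    fix e k assume e: "e \<in> E"
    show "\<phi> (e, k) = \<phi>' (e, k) * sq (Bl (ctgt rv R k e)) / sq (Wh e)"
      using \<phi>'e[OF e, of k] sq0 by (simp add: field_simps)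
  qed
  show ?thesis
    using K spin_phi_of[OF iso K] dirac_phi_of[OF iso pos] coh unfolding \<phi>'_def by blast
qed


theorem proposition3p7:
  fixes E :: "'d set" and rv R :: "'d \<Rightarrow> 'd" and th :: "'d \<Rightarrow> real"
  assumes "isoradial E rv R th"
    and "\<forall>e\<in>E. 0 < th e \<and> th e < pi / 2"
  shows "(\<forall>\<omega>. kasteleyn E rv R \<omega> \<longrightarrow>
            (\<exists>!\<phi>. spin_structure E rv R th \<phi> \<and> dirac_identity E rv R th \<omega> \<phi>))
       \<and> (\<forall>\<omega>1 \<omega>2 \<phi>1 \<phi>2.
            kasteleyn E rv R \<omega>1 \<longrightarrow> kasteleyn E rv R \<omega>2 \<longrightarrow>
            spin_structure E rv R th \<phi>1 \<longrightarrow> spin_structure E rv R th \<phi>2 \<longrightarrow>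
            dirac_identity E rv R th \<omega>1 \<phi>1 \<longrightarrow> dirac_identity E rv R th \<omega>2 \<phi>2 \<longrightarrow>
            (kast_equiv E rv R \<omega>1 \<omega>2 \<longleftrightarrow> cohomologous E rv R \<phi>1 \<phi>2))
       \<and> (\<forall>\<phi>. spin_structure E rv R th \<phi> \<longrightarrow>
            (\<exists>\<omega> \<phi>'. kasteleyn E rv R \<omega> \<and> spin_structure E rv R th \<phi>' \<and>
                     dirac_identity E rv R th \<omega> \<phi>' \<and> cohomologous E rv R \<phi>' \<phi>))"
proof (intro conjI allI impI)
  note iso = assms(1) and pos = assms(2)
  fix \<omega> assume K: "kasteleyn E rv R \<omega>"
  show "\<exists>!\<phi>. spin_structure E rv R th \<phi> \<and> dirac_identity E rv R th \<omega> \<phi>"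
  proof (rule ex1I[of _ "phi_of E R th \<omega>"])
    show "spin_structure E rv R th (phi_of E R th \<omega>) \<and> dirac_identity E rv R th \<omega> (phi_of E R th \<omega>)"
      using spin_phi_of[OF iso K] dirac_phi_of[OF iso pos] by blast
  next
    fix \<phi> assume "spin_structure E rv R th \<phi> \<and> dirac_identity E rv R th \<omega> \<phi>"
    then show "\<phi> = phi_of E R th \<omega>" using unique_phi[OF iso pos K] by blast
  qed
next
  note iso = assms(1) and pos = assms(2)
  fix \<omega>1 \<omega>2 \<phi>1 \<phi>2
  assume K1: "kasteleyn E rv R \<omega>1" and K2: "kasteleyn E rv R \<omega>2"
    and S1: "spin_structure E rv R th \<phi>1" and S2: "spin_structure E rv R th \<phi>2"
    and D1: "dirac_identity E rv R th \<omega>1 \<phi>1" and D2: "dirac_identity E rv R th \<omega>2 \<phi>2"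
  have p1: "\<phi>1 = phi_of E R th \<omega>1" using unique_phi[OF iso pos K1 S1 D1] .
  have p2: "\<phi>2 = phi_of E R th \<omega>2" using unique_phi[OF iso pos K2 S2 D2] .
  show "kast_equiv E rv R \<omega>1 \<omega>2 \<longleftrightarrow> cohomologous E rv R \<phi>1 \<phi>2"
    unfolding p1 p2 using equiv_imp_coh[OF K1 K2] coh_imp_equiv[OF iso K1 K2] by blast
next
  note iso = assms(1) and pos = assms(2)
  fix \<phi> assume "spin_structure E rv R th \<phi>"
  then show "\<exists>\<omega> \<phi>'. kasteleyn E rv R \<omega> \<and> spin_structure E rv R th \<phi>' \<and>
                     dirac_identity E rv R th \<omega> \<phi>' \<and> cohomologous E rv R \<phi>' \<phi>"
    using part3[OF iso pos] by blast
qed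

end
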